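(* Assume the one-hidden-neuron setting described in the context, let $\Theta=(\Theta_t)_{t\in[0,\infty)}\in C([0,\infty),\mathbb{R}^4)$ satisfy $\Theta_t=\Theta_0-\int_0^t\mathcal{G}(\Theta_s)\,\mathrm{d}s$ for all $t\in[0,\infty)$, write $\Theta_t=(w_t,b_t,v_t,c_t)$, let $m=\rho\int_{\mathscr{a}}^{\mathscr{b}}\big(f(x)-(\mathscr{b}-\mathscr{a})^{-1}\int_{\mathscr{a}}^{\mathscr{b}}f(y)\,\mathrm{d}y\big)^2\,\mathrm{d}x$, and assume $\mathcal{L}(\Theta_0)<m$. Then (i) $\sup_{t\in[0,\infty)}|w_tv_t|<\infty$; (ii) $\sup_{t\in[0,\infty)}|w_t|\le\big[\sup_{t\in[0,\infty)}\max\{1,|w_0|^2+|b_0|^2-|v_0|^2+|w_tv_t|^2\}\big]^{1/2}<\infty$; (iii) for all $t\in[0,\infty)$: $\sup_{x\in[\mathscr{a},\mathscr{b}]}|\mathscr{N}^{\Theta_t}(x)|\le2\big[\sup_{x\in[\mathscr{a},\mathscr{b}]}|f(x)|\big]+(\mathscr{b}-\mathscr{a})|w_tv_t|<\infty$; (iv) for all $\alpha,\beta\in\mathbb{R}$ with $f(x)=\alpha x+\beta$ for all $x\in[\mathscr{a},\mathscr{b}]$ it holds that $\inf_{t\in[0,\infty)}\alpha w_tv_t>0$.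
   Context: One-hidden-neuron setting: $\mathscr{a}\in\mathbb{R}$, $\mathscr{b}\in(\mathscr{a},\infty)$, $\rho\in(0,\infty)$, $f\in C([\mathscr{a},\mathscr{b}],\mathbb{R})$. For $\theta=(\theta_1,\theta_2,\theta_3,\theta_4)\in\mathbb{R}^4$ and $x\in\mathbb{R}$ let $\mathscr{N}^\theta(x)=\theta_3\max\{\theta_1x+\theta_2,0\}+\theta_4$ and $\mathcal{L}(\theta)=\rho\int_{\mathscr{a}}^{\mathscr{b}}(\mathscr{N}^\theta(y)-f(y))^2\,\mathrm{d}y$. Let $\mathfrak{R}_r\in C^1(\mathbb{R},\mathbb{R})$, $r\in\mathbb{N}$, satisfy for all $x\in\mathbb{R}$ that $\lim_{r\to\infty}\big(|\mathfrak{R}_r(x)-\max\{x,0\}|+|(\mathfrak{R}_r)'(x)-\mathbb{1}_{(0,\infty)}(x)|\big)=0$ and $\sup_{r\in\mathbb{N}}\sup_{y\in[-|x|,|x|]}(|\mathfrak{R}_r(y)|+|(\mathfrak{R}_r)'(y)|)<\infty$; for $r\in\mathbb{N}$ let $\mathfrak{L}_r(\theta)=\rho\int_{\mathscr{a}}^{\mathscr{b}}(\theta_3\mathfrak{R}_r(\theta_1x+\theta_2)+\theta_4-f(x))^2\,\mathrm{d}x$, and let $\mathcal{G}\colon\mathbb{R}^4\to\mathbb{R}^4$ satisfy $\mathcal{G}(\theta)=\lim_{r\to\infty}(\nabla\mathfrak{L}_r)(\theta)$ for every $\theta$ for which this limit exists ($\mathcal{G}$ is locally bounded and measurable). *)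

theory Defs
  imports "HOL-Analysis.Analysis"
begin

definition realiz :: "real^4 \<Rightarrow> real \<Rightarrow> real" where
  "realiz \<theta> x = \<theta>$3 * max (\<theta>$1 * x + \<theta>$2) 0 + \<theta>$4"

definition loss :: "real \<Rightarrow> real \<Rightarrow> real \<Rightarrow> (real \<Rightarrow> real) \<Rightarrow> real^4 \<Rightarrow> real" where
  "loss \<rho> a b f \<theta> = \<rho> * integral {a..b} (\<lambda>y. (realiz \<theta> y - f y)^2)"

definition loss_act :: "(real \<Rightarrow> real) \<Rightarrow> real \<Rightarrow> real \<Rightarrow> real \<Rightarrow> (real \<Rightarrow> real) \<Rightarrow> real^4 \<Rightarrow> real" where
  "loss_act R \<rho> a b f \<theta> = \<rho> * integral {a..b} (\<lambda>x. (\<theta>$3 * R (\<theta>$1 * x + \<theta>$2) + \<theta>$4 - f x)^2)"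

definition grad :: "(real^4 \<Rightarrow> real) \<Rightarrow> real^4 \<Rightarrow> real^4" where
  "grad F \<theta> = (THE D. GDERIV F \<theta> :> D)"

end

theory Submission
  imports Defs
begin

lemma bilinear_inner_real4: "bilinear (inner :: real^4 \<Rightarrow> real^4 \<Rightarrow> real)"
  by (simp add: bilinear_def linear_iff inner_add_left inner_add_right)

lemma flow_lip:
  fixes g X :: "real \<Rightarrow> real^4"
  assumes flow: "\<And>t. t \<in> {0..T} \<Longrightarrow> (g has_integral (X 0 - X t)) {0..t}"
    and gB: "\<And>s. s \<in> {0..T} \<Longrightarrow> norm (g s) \<le> B"
    and u: "u \<in> {0..T}" and t: "t \<in> {0..T}"
  shows "norm (X u - X t) \<le> B * \<bar>u - t\<bar>"
proof -
  have gi: "g integrable_on {0..T}" using flow[of T] u by auto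
  have *: "norm (X u - X t) \<le> B * (u - t)" if tu: "t \<le> u" "t \<in> {0..T}" "u \<in> {0..T}" for t u
  proof -
    have gu: "g integrable_on {0..u}" using integrable_subinterval_real[OF gi] tu by auto
    have "integral {0..t} g + integral {t..u} g = integral {0..u} g"
      using Henstock_Kurzweil_Integration.integral_combine[OF _ _ gu, of t] tu by auto
    moreover have "integral {0..t} g = X 0 - X t" "integral {0..u} g = X 0 - X u"
      using flow tu by (auto simp: integral_unique)
    ultimately have "X t - X u = integral {t..u} g" by (simp add: algebra_simps)
    then have "norm (X u - X t) = norm (integral {t..u} g)" by (simp add: norm_minus_commute)
    also have "\<dots> \<le> integral {t..u} (\<lambda>_. B)"
      apply (rule integral_norm_bound_integral)
      using integrable_subinterval_real[OF gi] tu apply auto[1]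
       apply (rule integrable_const_ivl)
      using gB tu by auto
    also have "\<dots> = B * (u - t)" using tu by simp
    finally show ?thesis .
  qed
  show ?thesis
  proof (cases "t \<le> u")
    case True then show ?thesis using *[OF True t u] by simp
  next
    case False then show ?thesis using *[of u t] t u by (simp add: norm_minus_commute)
  qed
qed

lemma chain_flow:
  fixes F :: "real^4 \<Rightarrow> real" and DF :: "real^4 \<Rightarrow> real^4" and g X :: "real \<Rightarrow> real^4"
  assumes dF: "\<And>\<theta>. (F has_derivative (\<lambda>h. h \<bullet> DF \<theta>)) (at \<theta>)"
    and cDF: "continuous_on UNIV DF"
    and cX: "continuous_on {0..T} X"
    and flow: "\<And>t. t \<in> {0..T} \<Longrightarrow> (g has_integral (X 0 - X t)) {0..t}"
    and gB: "\<And>s. s \<in> {0..T} \<Longrightarrow> norm (g s) \<le> B"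
    and T: "T \<ge> 0"
  shows "F (X T) - F (X 0) = - integral {0..T} (\<lambda>s. DF (X s) \<bullet> g s)"
    and "(\<lambda>s. DF (X s) \<bullet> g s) integrable_on {0..T}"
proof -
  have "norm (g 0) \<le> B" using gB T by auto
  then have B0: "B \<ge> 0" using norm_ge_zero[of "g 0"] by linarith
  have gi: "g integrable_on {0..T}" using flow[of T] T by auto
  have gabs: "g absolutely_integrable_on {0..T}"
    by (rule absolutely_integrable_integrable_bound[OF gB gi]) (auto intro: integrable_const_ivl)
  have cDX: "continuous_on {0..T} (\<lambda>s. DF (X s))"
    by (rule continuous_on_compose2[OF cDF cX]) auto
  have ki_abs: "(\<lambda>s. DF (X s) \<bullet> g s) absolutely_integrable_on {0..T}"
  proof (rule absolutely_integrable_bounded_measurable_product[OF bilinear_inner_real4 _ _ _ gabs])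
    show "(\<lambda>s. DF (X s)) \<in> borel_measurable (lebesgue_on {0..T})"
      by (rule continuous_imp_measurable_on_sets_lebesgue[OF cDX]) simp
    show "{0..T} \<in> sets lebesgue" by simp
    show "bounded ((\<lambda>s. DF (X s)) ` {0..T})"
      by (rule compact_imp_bounded[OF compact_continuous_image[OF cDX]]) simp
  qed
  then have ki: "(\<lambda>s. DF (X s) \<bullet> g s) integrable_on {0..T}"
    by (rule set_lebesgue_integral_eq_integral(1))
  then show "(\<lambda>s. DF (X s) \<bullet> g s) integrable_on {0..T}" .
  define \<psi> where "\<psi> u = F (X u) + integral {0..u} (\<lambda>s. DF (X s) \<bullet> g s)" for u
  have d0: "(\<psi> has_derivative (\<lambda>h. 0)) (at t within {0..T})" if t: "t \<in> {0..T}" for t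
  proof -
    define D0 where "D0 = DF (X t)"
    define ht where "ht s = (DF (X s) - D0) \<bullet> g s" for s
    have hti: "ht integrable_on {0..T}"
    proof -
      have "(\<lambda>s. D0 \<bullet> g s) integrable_on {0..T}"
        using integrable_linear[OF gi bounded_linear_inner_right[of D0]] by (simp add: o_def)
      then show ?thesis using integrable_diff[OF ki] unfolding ht_def by (simp add: inner_diff_left)
    qed
    have decomp: "\<psi> u = (F (X u) - D0 \<bullet> X u) + integral {0..u} ht + D0 \<bullet> X 0" if u: "u \<in> {0..T}" for u
    proof -
      have giu: "g integrable_on {0..u}" using integrable_subinterval_real[OF gi] u by auto
      have kiu: "(\<lambda>s. DF (X s) \<bullet> g s) integrable_on {0..u}" using integrable_subinterval_real[OF ki] u by auto
      have "integral {0..u} (\<lambda>s. D0 \<bullet> g s) = D0 \<bullet> integral {0..u} g"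
        using integral_linear[OF giu bounded_linear_inner_right[of D0]] by (simp add: o_def)
      also have "integral {0..u} g = X 0 - X u" using flow[OF u] by (simp add: integral_unique)
      finally have e1: "integral {0..u} (\<lambda>s. D0 \<bullet> g s) = D0 \<bullet> (X 0 - X u)" .
      have d0i: "(\<lambda>s. D0 \<bullet> g s) integrable_on {0..u}"
        using integrable_linear[OF giu bounded_linear_inner_right[of D0]] by (simp add: o_def)
      have "integral {0..u} ht = integral {0..u} (\<lambda>s. DF (X s) \<bullet> g s) - integral {0..u} (\<lambda>s. D0 \<bullet> g s)"
      proof -
        have "ht = (\<lambda>s. DF (X s) \<bullet> g s - D0 \<bullet> g s)" by (simp add: ht_def fun_eq_iff inner_diff_left)
        then show ?thesis using integral_diff[OF kiu d0i] by simp
      qed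
      then show ?thesis unfolding \<psi>_def using e1 by (simp add: inner_diff_right)
    qed
    have dA: "((\<lambda>u. F (X u) - D0 \<bullet> X u) has_derivative (\<lambda>h. 0)) (at t within {0..T})"
      unfolding has_derivative_within_alt
    proof (intro conjI allI impI)
      show "bounded_linear (\<lambda>h::real. 0::real)" by simp
      fix e :: real assume e: "e > 0"
      have "(F has_derivative (\<lambda>h. h \<bullet> D0)) (at (X t) within UNIV)" using dF unfolding D0_def by simp
      then have A: "\<forall>e>0. \<exists>d>0. \<forall>y\<in>UNIV. norm (y - X t) < d \<longrightarrow> norm (F y - F (X t) - (y - X t) \<bullet> D0) \<le> e * norm (y - X t)"
        unfolding has_derivative_within_alt by blast
      have eB: "e / (B + 1) > 0" using e B0 by simp
      obtain d' where d': "d' > 0" "\<And>y. norm (y - X t) < d' \<Longrightarrow>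
          norm (F y - F (X t) - (y - X t) \<bullet> D0) \<le> (e / (B + 1)) * norm (y - X t)"
        using A[rule_format, OF eB] by blast
      show "\<exists>d>0. \<forall>u\<in>{0..T}. norm (u - t) < d \<longrightarrow>
          norm (F (X u) - D0 \<bullet> X u - (F (X t) - D0 \<bullet> X t) - 0) \<le> e * norm (u - t)"
      proof (intro exI[of _ "d' / (B + 1)"] conjI ballI impI)
        show "d' / (B + 1) > 0" using d' B0 by simp
        fix u assume u: "u \<in> {0..T}" and ud: "norm (u - t) < d' / (B + 1)"
        have L: "norm (X u - X t) \<le> B * \<bar>u - t\<bar>" by (rule flow_lip[OF flow gB u t])
        have "B * \<bar>u - t\<bar> \<le> (B + 1) * \<bar>u - t\<bar>" by (simp add: mult_right_mono)
        also have "\<dots> < d'" using ud B0 by (simp add: field_simps)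
        finally have "norm (X u - X t) < d'" using L by linarith
        then have "norm (F (X u) - F (X t) - (X u - X t) \<bullet> D0) \<le> (e / (B + 1)) * norm (X u - X t)"
          using d' by blast
        also have "\<dots> \<le> (e / (B + 1)) * (B * \<bar>u - t\<bar>)" using L e B0 by (intro mult_left_mono) auto
        also have "\<dots> \<le> e * \<bar>u - t\<bar>"
        proof -
          have "(e / (B + 1)) * (B * \<bar>u - t\<bar>) = e * \<bar>u - t\<bar> * (B / (B + 1))" by (simp add: field_simps)
          also have "\<dots> \<le> e * \<bar>u - t\<bar> * 1" using B0 e by (intro mult_left_mono) auto
          finally show ?thesis by simp
        qed
        finally show "norm (F (X u) - D0 \<bullet> X u - (F (X t) - D0 \<bullet> X t) - 0) \<le> e * norm (u - t)"
          by (simp add: inner_diff_left inner_commute algebra_simps)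
      qed
    qed
    have ht_t: "ht t = 0" unfolding ht_def D0_def by simp
    have cht: "continuous (at t within {0..T}) ht"
    proof -
      have "((\<lambda>s. DF (X s)) \<longlongrightarrow> D0) (at t within {0..T})"
        using cDX t unfolding D0_def continuous_on_def by blast
      note l1 = this
      have l2: "((\<lambda>s. DF (X s) - D0) \<longlongrightarrow> 0) (at t within {0..T})"
        using tendsto_diff[OF l1 tendsto_const[of D0]] by simp
      have tl: "((\<lambda>s. norm (DF (X s) - D0) * B) \<longlongrightarrow> 0) (at t within {0..T})"
        using tendsto_mult[OF tendsto_norm[OF l2] tendsto_const[of B]] by simp
      have ev: "eventually (\<lambda>s. norm (ht s) \<le> norm (DF (X s) - D0) * B) (at t within {0..T})"
      proof -
        have "norm (ht x) \<le> norm (DF (X x) - D0) * B" if "x \<in> {0..T}" for x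
        proof -
          have "norm (ht x) \<le> norm (DF (X x) - D0) * norm (g x)"
            unfolding ht_def real_norm_def by (rule Cauchy_Schwarz_ineq2)
          also have "\<dots> \<le> norm (DF (X x) - D0) * B" by (rule mult_left_mono[OF gB[OF that]]) simp
          finally show ?thesis .
        qed
        then show ?thesis unfolding eventually_at_filter
          by (intro always_eventually allI impI) blast
      qed
      have "(ht \<longlongrightarrow> 0) (at t within {0..T})"
        by (rule Lim_null_comparison[OF ev tl])
      then show ?thesis using ht_t by (simp add: continuous_within)
    qed
    have dB: "((\<lambda>u. integral {0..u} ht) has_derivative (\<lambda>h. 0)) (at t within {0..T})"
    proof -
      have "((\<lambda>u. integral {0..u} ht) has_vector_derivative ht t) (at t within ({0..T} - {}))"
        by (rule integral_has_vector_derivative_continuous_at[OF hti]) (use t cht in auto)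
      then show ?thesis using ht_t by (simp add: has_vector_derivative_def)
    qed
    have dsum: "((\<lambda>u. (F (X u) - D0 \<bullet> X u) + integral {0..u} ht + D0 \<bullet> X 0) has_derivative (\<lambda>h. 0)) (at t within {0..T})"
      by (rule has_derivative_eq_rhs[OF has_derivative_add[OF has_derivative_add[OF dA dB] has_derivative_const]]) simp
    show ?thesis
      by (rule has_derivative_transform[OF t decomp dsum])
  qed
  obtain c where c: "\<forall>u\<in>{0..T}. \<psi> u = c"
    using has_derivative_zero_constant[of "{0..T}" \<psi>] d0 by auto
  then have "\<psi> T = \<psi> 0" using T by auto
  then show "F (X T) - F (X 0) = - integral {0..T} (\<lambda>s. DF (X s) \<bullet> g s)"
    unfolding \<psi>_def by simp
qed

definition vec4 :: "real \<Rightarrow> real \<Rightarrow> real \<Rightarrow> real \<Rightarrow> real^4" where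
  "vec4 p q r s = (\<chi> i. if i = 1 then p else if i = 2 then q else if i = 3 then r else s)"
lemma vec4_nth[simp]: "vec4 p q r s $ 1 = p" "vec4 p q r s $ 2 = q" "vec4 p q r s $ 3 = r" "vec4 p q r s $ 4 = s"
  by (simp_all add: vec4_def)
lemma sum_4: "sum g (UNIV::4 set) = g 1 + g 2 + g 3 + g 4"
  unfolding UNIV_4 by (simp add: ac_simps)
lemma inner4: "(x::real^4) \<bullet> y = x$1*y$1 + x$2*y$2 + x$3*y$3 + x$4*y$4"
  by (simp add: inner_vec_def sum_4)

definition dv :: "(real \<Rightarrow> real) \<Rightarrow> (real \<Rightarrow> real) \<Rightarrow> real \<Rightarrow> (real \<Rightarrow> real) \<Rightarrow> real^4 \<Rightarrow> real \<Rightarrow> real^4" where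
  "dv R R1 \<rho> f \<theta> x = (2 * \<rho> * (\<theta>$3 * R (\<theta>$1 * x + \<theta>$2) + \<theta>$4 - f x)) *\<^sub>R
     vec4 (\<theta>$3 * R1 (\<theta>$1 * x + \<theta>$2) * x) (\<theta>$3 * R1 (\<theta>$1 * x + \<theta>$2)) (R (\<theta>$1 * x + \<theta>$2)) 1"

lemma hd_nth: "((\<lambda>\<theta>::real^4. \<theta>$i) has_derivative (\<lambda>h. h$i)) F"
  by (rule bounded_linear_imp_has_derivative) auto

lemma deriv_integrand:
  assumes "\<And>x. (R has_real_derivative R1 x) (at x)"
  shows "((\<lambda>\<theta>::real^4. \<rho> * (\<theta>$3 * R (\<theta>$1 * t + \<theta>$2) + \<theta>$4 - f t)^2)
           has_derivative (\<lambda>h. h \<bullet> dv R R1 \<rho> f \<theta> t)) (at \<theta>)"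
proof -
  have z: "((\<lambda>\<theta>::real^4. \<theta>$1 * t + \<theta>$2) has_derivative (\<lambda>h. h$1 * t + h$2)) (at \<theta>)"
    by (intro derivative_intros hd_nth)
  have Rz: "((\<lambda>\<theta>::real^4. R (\<theta>$1 * t + \<theta>$2)) has_derivative (\<lambda>h. (h$1 * t + h$2) * R1 (\<theta>$1 * t + \<theta>$2))) (at \<theta>)"
    by (rule DERIV_compose_FDERIV[OF assms z])
  have e: "((\<lambda>\<theta>::real^4. \<theta>$3 * R (\<theta>$1 * t + \<theta>$2) + \<theta>$4 - f t) has_derivative
     (\<lambda>h. \<theta>$3 * ((h$1 * t + h$2) * R1 (\<theta>$1 * t + \<theta>$2)) + h$3 * R (\<theta>$1 * t + \<theta>$2) + h$4)) (at \<theta>)"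
    apply (rule has_derivative_eq_rhs)
     apply (rule has_derivative_diff has_derivative_add has_derivative_mult has_derivative_const hd_nth Rz)+
    apply (auto simp: algebra_simps)
    done
  show ?thesis
    apply (rule has_derivative_eq_rhs)
     apply (rule has_derivative_mult_right)
     apply (rule has_derivative_power[OF e, where n=2])
    apply (rule ext)
    apply (simp add: dv_def inner4 algebra_simps power2_eq_square)
    done
qed

lemma continuous_on_vec4[continuous_intros]:
  assumes "continuous_on S p" "continuous_on S q" "continuous_on S r" "continuous_on S s"
  shows "continuous_on S (\<lambda>x. vec4 (p x) (q x) (r x) (s x))"
  unfolding vec4_def apply (intro continuous_on_vec_lambda)
  subgoal for i by (cases "i = 1"; cases "i = 2"; cases "i = 3") (auto simp: assms)
  done

lemma tendsto_vec4[tendsto_intros]: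
  assumes "(p \<longlongrightarrow> p0) F" "(q \<longlongrightarrow> q0) F" "(r \<longlongrightarrow> r0) F" "(s \<longlongrightarrow> s0) F"
  shows "((\<lambda>x. vec4 (p x) (q x) (r x) (s x)) \<longlongrightarrow> vec4 p0 q0 r0 s0) F"
  unfolding vec4_def apply (intro tendsto_vec_lambda)
  subgoal for i by (cases "i = 1"; cases "i = 2"; cases "i = 3") (auto simp: assms)
  done

lemma cont_dv:
  assumes R: "\<And>x. (R has_real_derivative R1 x) (at x)" and R1: "continuous_on UNIV R1"
    and f: "continuous_on {a..b} f"
  shows "continuous_on (UNIV \<times> {a..b}) (\<lambda>(\<theta>, t). dv R R1 \<rho> f \<theta> t)"
proof -
  have cR: "continuous_on UNIV R"
    using R by (meson DERIV_isCont continuous_at_imp_continuous_on)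
  have cf: "continuous_on (UNIV \<times> {a..b}) (\<lambda>x::(real^4) \<times> real. f (snd x))"
    by (rule continuous_on_compose2[OF f continuous_on_snd]) auto
  have cz: "continuous_on (UNIV \<times> {a..b}) (\<lambda>x::(real^4) \<times> real. fst x $ 1 * snd x + fst x $ 2)"
    by (intro continuous_intros)
  have cRz: "continuous_on (UNIV \<times> {a..b}) (\<lambda>x::(real^4) \<times> real. R (fst x $ 1 * snd x + fst x $ 2))"
    by (rule continuous_on_compose2[OF cR cz]) auto
  have cR1z: "continuous_on (UNIV \<times> {a..b}) (\<lambda>x::(real^4) \<times> real. R1 (fst x $ 1 * snd x + fst x $ 2))"
    by (rule continuous_on_compose2[OF R1 cz]) auto
  show ?thesis
    unfolding dv_def split_beta
    by (intro continuous_intros cf cRz cR1z)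
qed

lemma gderiv_act:
  assumes ab: "a \<le> b" and R: "\<And>x. (R has_real_derivative R1 x) (at x)" and R1: "continuous_on UNIV R1"
    and f: "continuous_on {a..b} f"
  shows "GDERIV (loss_act R \<rho> a b f) \<theta> :> integral {a..b} (dv R R1 \<rho> f \<theta>)"
proof -
  have c: "continuous_on (UNIV \<times> {a..b}) (\<lambda>(\<theta>, t). dv R R1 \<rho> f \<theta> t)"
    by (rule cont_dv[OF R R1 f])
  have cb: "continuous_on (UNIV \<times> cbox a b) (\<lambda>(\<theta>, t). blinfun_inner_left (dv R R1 \<rho> f \<theta> t))"
    using bounded_linear.continuous_on[OF bounded_linear_blinfun_inner_left c]
    by (simp add: split_beta)
  have int: "(dv R R1 \<rho> f \<theta>) integrable_on {a..b}"
  proof -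
    have "continuous_on {a..b} (\<lambda>t. (\<theta>, t))" by (intro continuous_intros)
    moreover have "(\<lambda>t. (\<theta>,t)) ` {a..b} \<subseteq> UNIV \<times> {a..b}" by auto
    ultimately have "continuous_on {a..b} ((\<lambda>(\<theta>,t). dv R R1 \<rho> f \<theta> t) \<circ> (\<lambda>t. (\<theta>,t)))"
      using continuous_on_compose continuous_on_subset c by blast
    then have "continuous_on {a..b} (\<lambda>t. dv R R1 \<rho> f \<theta> t)" by (simp add: o_def)
    then show ?thesis by (rule integrable_continuous_interval)
  qed
  have cF: "continuous_on {a..b} (\<lambda>t. \<rho> * (\<theta>'$3 * R (\<theta>'$1 * t + \<theta>'$2) + \<theta>'$4 - f t)^2)" for \<theta>' :: "real^4"
  proof -
    have cR: "continuous_on UNIV R"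
      using R by (meson DERIV_isCont continuous_at_imp_continuous_on)
    have "continuous_on {a..b} (\<lambda>t. R (\<theta>'$1 * t + \<theta>'$2))"
      by (rule continuous_on_compose2[OF cR]) (auto intro!: continuous_intros)
    then show ?thesis by (intro continuous_intros f)
  qed
  have L: "((\<lambda>\<theta>. integral (cbox a b) (\<lambda>t. \<rho> * (\<theta>$3 * R (\<theta>$1 * t + \<theta>$2) + \<theta>$4 - f t)^2))
        has_derivative integral (cbox a b) (\<lambda>t. blinfun_inner_left (dv R R1 \<rho> f \<theta> t))) (at \<theta> within UNIV)"
    apply (rule leibniz_rule[where fx="\<lambda>\<theta> t. blinfun_inner_left (dv R R1 \<rho> f \<theta> t)"])
        apply (simp add: deriv_integrand[OF R])
       apply (simp add: cF integrable_continuous_interval)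
    using cb apply simp
     apply simp_all
    done
  have eq1: "integral (cbox a b) (\<lambda>t. blinfun_inner_left (dv R R1 \<rho> f \<theta> t)) = blinfun_inner_left (integral {a..b} (dv R R1 \<rho> f \<theta>))"
    using integral_linear[OF int bounded_linear_blinfun_inner_left] by (simp add: o_def)
  have eq2: "loss_act R \<rho> a b f = (\<lambda>\<theta>. integral (cbox a b) (\<lambda>t. \<rho> * (\<theta>$3 * R (\<theta>$1 * t + \<theta>$2) + \<theta>$4 - f t)^2))"
  proof
    fix \<theta>' :: "real^4"
    show "loss_act R \<rho> a b f \<theta>' = integral (cbox a b) (\<lambda>t. \<rho> * (\<theta>'$3 * R (\<theta>'$1 * t + \<theta>'$2) + \<theta>'$4 - f t)^2)"
      unfolding loss_act_def using integral_mult_right by simp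
  qed
  show ?thesis
    using L unfolding eq1 eq2 by (simp add: gderiv_def)
qed

lemma gderiv_unique:
  assumes "GDERIV F \<theta> :> D" "GDERIV F \<theta> :> D'"
  shows "D = (D'::real^4)"
proof -
  have "(\<lambda>h. h \<bullet> D) = (\<lambda>h. h \<bullet> D')"
    using assms unfolding gderiv_def by (rule has_derivative_unique)
  then have "(D - D') \<bullet> D = (D - D') \<bullet> D'" by meson
  then have "(D - D') \<bullet> (D - D') = 0" by (simp add: inner_diff_right)
  then show ?thesis by simp
qed

lemma grad_act:
  assumes ab: "a \<le> b" and R: "\<And>x. (R has_real_derivative R1 x) (at x)" and R1: "continuous_on UNIV R1"
    and f: "continuous_on {a..b} f"
  shows "grad (loss_act R \<rho> a b f) \<theta> = integral {a..b} (dv R R1 \<rho> f \<theta>)"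
  unfolding grad_def using gderiv_act[OF assms] gderiv_unique by blast

locale setting =
  fixes a b \<rho> :: real and f :: "real \<Rightarrow> real" and R R' :: "nat \<Rightarrow> real \<Rightarrow> real"
  assumes ab: "a < b" and rho: "\<rho> > 0"
    and f_cont: "continuous_on {a..b} f"
    and R_deriv: "\<forall>r\<ge>1. \<forall>x. (R r has_real_derivative R' r x) (at x)"
    and R'_cont: "\<forall>r\<ge>1. continuous_on UNIV (R' r)"
    and R_lim: "\<forall>x. (\<lambda>r. \<bar>R r x - max x 0\<bar> + \<bar>R' r x - indicator {0<..} x\<bar>) \<longlonglongrightarrow> 0"
    and R_bdd: "\<forall>x. \<exists>C. \<forall>r\<ge>1. \<forall>y\<in>{-\<bar>x\<bar>..\<bar>x\<bar>}. \<bar>R r y\<bar> + \<bar>R' r y\<bar> \<le> C"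
begin

definition relu :: "real \<Rightarrow> real" where "relu z = max z 0"
definition ind :: "real \<Rightarrow> real" where "ind z = indicator {0<..} z"

lemma R_bnd: "\<exists>C. \<forall>r\<ge>1. \<forall>y. \<bar>y\<bar> \<le> X \<longrightarrow> \<bar>R r y\<bar> \<le> C \<and> \<bar>R' r y\<bar> \<le> C"
proof -
  obtain C where C: "\<forall>r\<ge>1. \<forall>y\<in>{-\<bar>X\<bar>..\<bar>X\<bar>}. \<bar>R r y\<bar> + \<bar>R' r y\<bar> \<le> C"
    using R_bdd by blast
  show ?thesis
  proof (intro exI allI impI conjI)
    fix r :: nat and y :: real assume "r \<ge> 1" "\<bar>y\<bar> \<le> X"
    moreover have "y \<in> {-\<bar>X\<bar>..\<bar>X\<bar>}" using \<open>\<bar>y\<bar> \<le> X\<close> by auto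
    ultimately have "\<bar>R r y\<bar> + \<bar>R' r y\<bar> \<le> C" using C by blast
    then show "\<bar>R r y\<bar> \<le> C" "\<bar>R' r y\<bar> \<le> C" by auto
  qed
qed

lemma R_conv: "(\<lambda>k. R (Suc k) y) \<longlonglongrightarrow> relu y" "(\<lambda>k. R' (Suc k) y) \<longlonglongrightarrow> ind y"
proof -
  have L: "(\<lambda>r. \<bar>R r y - max y 0\<bar> + \<bar>R' r y - indicator {0<..} y\<bar>) \<longlonglongrightarrow> 0"
    using R_lim by blast
  have "(\<lambda>r. R r y - max y 0) \<longlonglongrightarrow> 0"
    by (rule tendsto_sandwich[of "\<lambda>r. - (\<bar>R r y - max y 0\<bar> + \<bar>R' r y - indicator {0<..} y\<bar>)" _ _
          "\<lambda>r. \<bar>R r y - max y 0\<bar> + \<bar>R' r y - indicator {0<..} y\<bar>"])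
       (use L tendsto_minus[OF L] in \<open>auto intro!: always_eventually\<close>)
  then have "(\<lambda>r. R r y) \<longlonglongrightarrow> relu y"
    unfolding relu_def using Lim_null by blast
  then show "(\<lambda>k. R (Suc k) y) \<longlonglongrightarrow> relu y" by (rule LIMSEQ_Suc)
  have "(\<lambda>r. R' r y - indicator {0<..} y) \<longlonglongrightarrow> 0"
    by (rule tendsto_sandwich[of "\<lambda>r. - (\<bar>R r y - max y 0\<bar> + \<bar>R' r y - indicator {0<..} y\<bar>)" _ _
          "\<lambda>r. \<bar>R r y - max y 0\<bar> + \<bar>R' r y - indicator {0<..} y\<bar>"])
       (use L tendsto_minus[OF L] in \<open>auto intro!: always_eventually\<close>)
  then have "(\<lambda>r. R' r y) \<longlonglongrightarrow> ind y"
    unfolding ind_def using Lim_null by blast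
  then show "(\<lambda>k. R' (Suc k) y) \<longlonglongrightarrow> ind y" by (rule LIMSEQ_Suc)
qed

lemma f_bnd: "\<exists>M>0. \<forall>t\<in>{a..b}. \<bar>f t\<bar> \<le> M"
proof -
  have "compact (f ` {a..b})" using compact_continuous_image[OF f_cont] by simp
  then have "bounded (f ` {a..b})" by (rule compact_imp_bounded)
  then show ?thesis unfolding bounded_pos by auto
qed


end

lemma dv_bound_gen:
  assumes Q: "Q \<ge> 0" and RC: "\<forall>y. \<bar>y\<bar> \<le> Q*T + Q \<longrightarrow> \<bar>Ra y\<bar> \<le> C \<and> \<bar>Rb y\<bar> \<le> C"
    and th: "norm \<theta> \<le> Q" and t: "\<bar>t\<bar> \<le> T" and ft: "\<bar>f t\<bar> \<le> M"
  shows "norm (dv Ra Rb \<rho> f \<theta> t) \<le> 2*\<bar>\<rho>\<bar>*(Q*C+Q+M)*(Q*C*T+Q*C+C+1)"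
proof -
  have thi: "\<bar>\<theta>$i\<bar> \<le> Q" for i using component_le_norm_cart[of \<theta> i] th by simp
  define z where "z = \<theta>$1 * t + \<theta>$2"
  have "\<bar>z\<bar> \<le> \<bar>\<theta>$1\<bar> * \<bar>t\<bar> + \<bar>\<theta>$2\<bar>" unfolding z_def by (metis abs_mult abs_triangle_ineq)
  also have "\<dots> \<le> Q*T + Q" using thi[of 1] thi[of 2] t by (intro add_mono mult_mono) auto
  finally have C: "\<bar>Ra z\<bar> \<le> C" "\<bar>Rb z\<bar> \<le> C" using RC by auto
  have C0: "C \<ge> 0" using C by linarith
  have T0: "T \<ge> 0" using t by linarith
  have "\<bar>\<theta>$3 * Ra z + \<theta>$4 - f t\<bar> \<le> \<bar>\<theta>$3\<bar> * \<bar>Ra z\<bar> + \<bar>\<theta>$4\<bar> + \<bar>f t\<bar>"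
    by (simp add: abs_mult[symmetric])
  also have "\<dots> \<le> Q*C + Q + M" using thi[of 3] thi[of 4] C ft by (intro add_mono mult_mono) auto
  finally have e: "\<bar>\<theta>$3 * Ra z + \<theta>$4 - f t\<bar> \<le> Q*C + Q + M" .
  have v1: "\<bar>\<theta>$3 * Rb z * t\<bar> \<le> Q*C*T" unfolding abs_mult
    using thi[of 3] C t C0 Q by (intro mult_mono) auto
  have v2: "\<bar>\<theta>$3 * Rb z\<bar> \<le> Q*C" unfolding abs_mult
    using thi[of 3] C C0 Q by (intro mult_mono) auto
  have nv: "norm (vec4 (\<theta>$3 * Rb z * t) (\<theta>$3 * Rb z) (Ra z) 1) \<le> Q*C*T+Q*C+C+1"
    using norm_le_l1_cart[of "vec4 (\<theta>$3 * Rb z * t) (\<theta>$3 * Rb z) (Ra z) 1"] v1 v2 C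
    by (simp add: sum_4)
  have "norm (dv Ra Rb \<rho> f \<theta> t) = 2*\<bar>\<rho>\<bar>*\<bar>\<theta>$3 * Ra z + \<theta>$4 - f t\<bar> * norm (vec4 (\<theta>$3 * Rb z * t) (\<theta>$3 * Rb z) (Ra z) 1)"
    unfolding dv_def z_def by (simp add: abs_mult)
  also have "\<dots> \<le> 2*\<bar>\<rho>\<bar>*(Q*C+Q+M)*(Q*C*T+Q*C+C+1)"
    using e nv by (intro mult_mono) auto
  finally show ?thesis .
qed

context setting begin

lemma dv_bnd: "\<exists>K. \<forall>\<theta> t. norm \<theta> \<le> Q \<longrightarrow> t \<in> {a..b} \<longrightarrow>
   (\<forall>r\<ge>1. norm (dv (R r) (R' r) \<rho> f \<theta> t) \<le> K) \<and> norm (dv relu ind \<rho> f \<theta> t) \<le> K"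
proof -
  define Q' where "Q' = max Q 0"
  define T where "T = \<bar>a\<bar> + \<bar>b\<bar>"
  obtain M where M: "M > 0" "\<forall>t\<in>{a..b}. \<bar>f t\<bar> \<le> M" using f_bnd by blast
  obtain C where C: "\<forall>r\<ge>1. \<forall>y. \<bar>y\<bar> \<le> Q'*T + Q' \<longrightarrow> \<bar>R r y\<bar> \<le> C \<and> \<bar>R' r y\<bar> \<le> C"
    using R_bnd by blast
  define C' where "C' = max C (max (Q'*T + Q') 1)"
  have C': "\<forall>r\<ge>1. \<forall>y. \<bar>y\<bar> \<le> Q'*T + Q' \<longrightarrow> \<bar>R r y\<bar> \<le> C' \<and> \<bar>R' r y\<bar> \<le> C'"
    using C unfolding C'_def by force
  have C'': "\<forall>y. \<bar>y\<bar> \<le> Q'*T + Q' \<longrightarrow> \<bar>relu y\<bar> \<le> C' \<and> \<bar>ind y\<bar> \<le> C'"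
    unfolding C'_def relu_def ind_def by (auto simp: indicator_def)
  define K where "K = 2*\<bar>\<rho>\<bar>*(Q'*C'+Q'+M)*(Q'*C'*T+Q'*C'+C'+1)"
  have A: "norm (dv relu ind \<rho> f \<theta> t) \<le> K" and B: "\<And>r. r \<ge> 1 \<Longrightarrow> norm (dv (R r) (R' r) \<rho> f \<theta> t) \<le> K"
    if th: "norm \<theta> \<le> Q" and t: "t \<in> {a..b}" for \<theta> :: "real^4" and t
  proof -
    have th': "norm \<theta> \<le> Q'" using th unfolding Q'_def by auto
    have tT: "\<bar>t\<bar> \<le> T" using t unfolding T_def by auto
    have ft: "\<bar>f t\<bar> \<le> M" using M t by auto
    show "norm (dv relu ind \<rho> f \<theta> t) \<le> K" unfolding K_def
      by (rule dv_bound_gen[where Ra=relu and Rb=ind and f=f, OF _ C'' th' tT ft]) (simp add: Q'_def)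
    fix r :: nat assume "r \<ge> 1"
    then show "norm (dv (R r) (R' r) \<rho> f \<theta> t) \<le> K" unfolding K_def
      using C' by (intro dv_bound_gen[where Ra="R r" and Rb="R' r" and f=f, OF _ _ th' tT ft]) (auto simp: Q'_def)
  qed
  show ?thesis using A B by blast
qed

lemma Rs_deriv: "\<And>x. (R (Suc k) has_real_derivative R' (Suc k) x) (at x)"
  using R_deriv by auto
lemma Rs_cont: "continuous_on UNIV (R' (Suc k))"
  using R'_cont by auto

lemma dv_int: "dv (R (Suc k)) (R' (Suc k)) \<rho> f \<theta> integrable_on {a..b}"
proof -
  have c: "continuous_on (UNIV \<times> {a..b}) (\<lambda>(\<theta>, t). dv (R (Suc k)) (R' (Suc k)) \<rho> f \<theta> t)"
    by (rule cont_dv[OF Rs_deriv Rs_cont f_cont])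
  have "continuous_on {a..b} (\<lambda>t. (\<theta>, t))" by (intro continuous_intros)
  moreover have "(\<lambda>t. (\<theta>,t)) ` {a..b} \<subseteq> UNIV \<times> {a..b}" by auto
  ultimately have "continuous_on {a..b} ((\<lambda>(\<theta>,t). dv (R (Suc k)) (R' (Suc k)) \<rho> f \<theta> t) \<circ> (\<lambda>t. (\<theta>,t)))"
    using continuous_on_compose continuous_on_subset c by blast
  then have "continuous_on {a..b} (\<lambda>t. dv (R (Suc k)) (R' (Suc k)) \<rho> f \<theta> t)" by (simp add: o_def)
  then show ?thesis by (rule integrable_continuous_interval)
qed

lemma dv_conv: "(\<lambda>k. dv (R (Suc k)) (R' (Suc k)) \<rho> f \<theta> t) \<longlonglongrightarrow> dv relu ind \<rho> f \<theta> t"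
  unfolding dv_def by (intro tendsto_intros R_conv)

lemma grad_lim:
  shows "dv relu ind \<rho> f \<theta> integrable_on {a..b}"
    and "(\<lambda>k. integral {a..b} (dv (R (Suc k)) (R' (Suc k)) \<rho> f \<theta>)) \<longlonglongrightarrow> integral {a..b} (dv relu ind \<rho> f \<theta>)"
proof -
  obtain K where K: "\<forall>\<theta>' t. norm \<theta>' \<le> norm \<theta> \<longrightarrow> t \<in> {a..b} \<longrightarrow>
   (\<forall>r\<ge>1. norm (dv (R r) (R' r) \<rho> f \<theta>' t) \<le> K) \<and> norm (dv relu ind \<rho> f \<theta>' t) \<le> K"
    using dv_bnd by blast
  have le: "norm (dv (R (Suc k)) (R' (Suc k)) \<rho> f \<theta> t) \<le> K" if "t \<in> {a..b}" for k t
    using K that by auto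
  note dc = dominated_convergence[OF dv_int integrable_const_ivl[of K a b] le dv_conv]
  show "dv relu ind \<rho> f \<theta> integrable_on {a..b}" by (rule dc(1))
  show "(\<lambda>k. integral {a..b} (dv (R (Suc k)) (R' (Suc k)) \<rho> f \<theta>)) \<longlonglongrightarrow> integral {a..b} (dv relu ind \<rho> f \<theta>)"
    by (rule dc(2))
qed

lemma grad_eq: "grad (loss_act (R (Suc k)) \<rho> a b f) \<theta> = integral {a..b} (dv (R (Suc k)) (R' (Suc k)) \<rho> f \<theta>)"
  using grad_act[OF _ Rs_deriv Rs_cont f_cont] ab by simp

lemma G_eq:
  assumes G_def: "\<forall>\<theta>. convergent (\<lambda>r. grad (loss_act (R r) \<rho> a b f) \<theta>)
                  \<longrightarrow> G \<theta> = lim (\<lambda>r. grad (loss_act (R r) \<rho> a b f) \<theta>)"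
  shows "G \<theta> = integral {a..b} (dv relu ind \<rho> f \<theta>)"
proof -
  have "(\<lambda>k. grad (loss_act (R (Suc k)) \<rho> a b f) \<theta>) \<longlonglongrightarrow> integral {a..b} (dv relu ind \<rho> f \<theta>)"
    unfolding grad_eq by (rule grad_lim(2))
  then have L: "(\<lambda>r. grad (loss_act (R r) \<rho> a b f) \<theta>) \<longlonglongrightarrow> integral {a..b} (dv relu ind \<rho> f \<theta>)"
    by (rule LIMSEQ_imp_Suc)
  then have "convergent (\<lambda>r. grad (loss_act (R r) \<rho> a b f) \<theta>)" by (auto simp: convergent_def)
  then show ?thesis using G_def L limI by metis
qed

end

lemma poly_int:
  fixes p q m :: real
  assumes "p \<le> q"
  shows "((\<lambda>x. (x - m)^2) has_integral ((q - m)^3/3 - (p - m)^3/3)) {p..q}"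
    and "((\<lambda>x. x - m) has_integral ((q - m)^2/2 - (p - m)^2/2)) {p..q}"
proof -
  show "((\<lambda>x. (x - m)^2) has_integral ((q - m)^3/3 - (p - m)^3/3)) {p..q}"
    by (rule fundamental_theorem_of_calculus[OF assms])
       (auto intro!: derivative_eq_intros simp: has_real_derivative_iff_has_vector_derivative[symmetric] power2_eq_square)
  show "((\<lambda>x. x - m) has_integral ((q - m)^2/2 - (p - m)^2/2)) {p..q}"
    by (rule fundamental_theorem_of_calculus[OF assms])
       (auto intro!: derivative_eq_intros simp: has_real_derivative_iff_has_vector_derivative[symmetric])
qed

lemma mid_int:
  fixes p q :: real
  assumes "p \<le> q"
  shows "((\<lambda>x. (x - (p+q)/2)^2) has_integral ((q - p)^3/12)) {p..q}"
    and "((\<lambda>x. x - (p+q)/2) has_integral 0) {p..q}"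
proof -
  have e1: "(q - (p+q)/2)^3/3 - (p - (p+q)/2)^3/3 = (q - p)^3/12"
    by (simp add: field_simps power3_eq_cube)
  show "((\<lambda>x. (x - (p+q)/2)^2) has_integral ((q - p)^3/12)) {p..q}"
    using poly_int(1)[OF assms, of "(p+q)/2"] unfolding e1 .
  have e2: "(q - (p+q)/2)^2/2 - (p - (p+q)/2)^2/2 = 0"
    by (simp add: field_simps power2_eq_square)
  show "((\<lambda>x. x - (p+q)/2) has_integral 0) {p..q}"
    using poly_int(2)[OF assms, of "(p+q)/2"] unfolding e2 .
qed

lemma affine_sq:
  fixes p q c s :: real
  assumes "p \<le> q"
  shows "integral {p..q} (\<lambda>x. (c + s*x)^2) \<ge> s^2 * (q - p)^3/12"
proof -
  define m where "m = (p+q)/2"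
  define A where "A = c + s*m"
  have h: "((\<lambda>x. 2*A * s*(x - m) + s^2*(x - m)^2) has_integral (2*A * s*0 + s^2*((q-p)^3/12))) {p..q}"
    unfolding m_def
    by (intro has_integral_add has_integral_mult_right mid_int[OF assms])
  have i: "((\<lambda>x. (c + s*x)^2) has_integral integral {p..q} (\<lambda>x. (c + s*x)^2)) {p..q}"
    by (intro integrable_integral integrable_continuous_interval continuous_intros)
  have "2*A * s*0 + s^2*((q-p)^3/12) \<le> integral {p..q} (\<lambda>x. (c + s*x)^2)"
  proof (rule has_integral_le[OF h i])
    fix x
    have "(c + s*x)^2 = (A + s*(x - m))^2" unfolding A_def by (simp add: algebra_simps)
    also have "\<dots> = A^2 + (2*A * s*(x - m) + s^2*(x - m)^2)" by (simp add: power2_eq_square algebra_simps)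
    finally show "2*A * s*(x - m) + s^2*(x - m)^2 \<le> (c + s*x)^2" by simp
  qed
  then show ?thesis by simp
qed

locale stat =
  fixes a b :: real and f :: "real \<Rightarrow> real"
  assumes ab: "a < b" and f_cont: "continuous_on {a..b} f"
begin

definition "mu = (1 / (b - a)) * integral {a..b} f"
definition "m0 = integral {a..b} (\<lambda>x. (f x - mu)^2)"
definition "E \<theta> = integral {a..b} (\<lambda>x. (realiz \<theta> x - f x)^2)"

lemma realiz_cont: "continuous_on S (realiz \<theta>)"
  unfolding realiz_def by (intro continuous_intros)

lemma fi: "f integrable_on {a..b}"
  by (rule integrable_continuous_interval[OF f_cont])

lemma const_dev: "integral {a..b} (\<lambda>x. (c - f x)^2) = m0 + (b - a) * (mu - c)^2"
proof -
  have fint: "(f has_integral (b - a) * mu) {a..b}"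
    using fi ab unfolding mu_def by (simp add: integrable_integral)
  have q: "((\<lambda>x. (f x - mu)^2) has_integral m0) {a..b}"
    unfolding m0_def by (intro integrable_integral integrable_continuous_interval continuous_intros f_cont)
  have l: "((\<lambda>x. 2 * (mu - c) * (f x - mu)) has_integral (2 * (mu - c) * ((b - a) * mu - (b - a) * mu))) {a..b}"
    by (intro has_integral_mult_right has_integral_diff fint) (use has_integral_const_real[of mu a b] ab in simp)
  have k: "((\<lambda>x. (mu - c)^2) has_integral (b - a) * (mu - c)^2) {a..b}"
    using has_integral_const_real[of "(mu - c)^2" a b] ab by simp
  have "((\<lambda>x. (f x - mu)^2 + 2 * (mu - c) * (f x - mu) + (mu - c)^2) has_integral
           (m0 + 2 * (mu - c) * ((b - a) * mu - (b - a) * mu) + (b - a) * (mu - c)^2)) {a..b}"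
    by (intro has_integral_add q l k)
  moreover have "(\<lambda>x. (f x - mu)^2 + 2 * (mu - c) * (f x - mu) + (mu - c)^2) = (\<lambda>x. (c - f x)^2)"
    by (simp add: fun_eq_iff power2_eq_square algebra_simps)
  ultimately show ?thesis by (simp add: integral_unique)
qed

lemma const_dev_ge: "integral {a..b} (\<lambda>x. (c - f x)^2) \<ge> m0"
  using const_dev ab by simp

lemma m0_nonneg: "m0 \<ge> 0"
  unfolding m0_def by (intro integral_nonneg integrable_continuous_interval continuous_intros f_cont) auto


definition "Mf = (SUP x\<in>{a..b}. \<bar>f x\<bar>)"

lemma f_bdd: "bdd_above ((\<lambda>x. \<bar>f x\<bar>) ` {a..b})"
proof -
  have "compact ((\<lambda>x. \<bar>f x\<bar>) ` {a..b})"
    by (intro compact_continuous_image continuous_intros f_cont) simp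
  then show ?thesis by (intro bounded_imp_bdd_above compact_imp_bounded)
qed

lemma f_le_Mf: "x \<in> {a..b} \<Longrightarrow> \<bar>f x\<bar> \<le> Mf"
  unfolding Mf_def by (rule cSUP_upper[OF _ f_bdd])

lemma Mf_nonneg: "Mf \<ge> 0"
  using f_le_Mf[of a] ab by force

lemma realiz_lip: "\<bar>realiz \<theta> x - realiz \<theta> y\<bar> \<le> \<bar>\<theta>$1 * \<theta>$3\<bar> * \<bar>x - y\<bar>"
proof -
  have m: "\<bar>max (\<theta>$1 * x + \<theta>$2) 0 - max (\<theta>$1 * y + \<theta>$2) 0\<bar> \<le> \<bar>\<theta>$1\<bar> * \<bar>x - y\<bar>"
  proof -
    have "\<bar>max (\<theta>$1 * x + \<theta>$2) 0 - max (\<theta>$1 * y + \<theta>$2) 0\<bar> \<le> \<bar>(\<theta>$1 * x + \<theta>$2) - (\<theta>$1 * y + \<theta>$2)\<bar>"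
      by (simp add: max_def abs_if split: if_splits)
    also have "\<dots> = \<bar>\<theta>$1\<bar> * \<bar>x - y\<bar>" by (simp add: abs_mult[symmetric] algebra_simps)
    finally show ?thesis .
  qed
  have "\<bar>realiz \<theta> x - realiz \<theta> y\<bar> = \<bar>\<theta>$3\<bar> * \<bar>max (\<theta>$1 * x + \<theta>$2) 0 - max (\<theta>$1 * y + \<theta>$2) 0\<bar>"
    unfolding realiz_def by (simp add: abs_mult[symmetric] algebra_simps)
  also have "\<dots> \<le> \<bar>\<theta>$3\<bar> * (\<bar>\<theta>$1\<bar> * \<bar>x - y\<bar>)" by (rule mult_left_mono[OF m]) simp
  finally show ?thesis by (simp add: abs_mult algebra_simps)
qed

lemma E_nonneg: "E \<theta> \<ge> 0"
  unfolding E_def by (intro integral_nonneg integrable_continuous_interval continuous_intros f_cont realiz_cont) auto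

lemma sup_bound:
  assumes E: "E \<theta> < m0"
  shows "bdd_above ((\<lambda>x. \<bar>realiz \<theta> x\<bar>) ` {a..b})"
    and "(SUP x\<in>{a..b}. \<bar>realiz \<theta> x\<bar>) \<le> 2 * (SUP x\<in>{a..b}. \<bar>f x\<bar>) + (b - a) * \<bar>\<theta>$1 * \<theta>$3\<bar>"
proof -
  have "\<exists>x0\<in>{a..b}. \<bar>realiz \<theta> x0\<bar> \<le> 2 * Mf"
  proof (rule ccontr)
    assume "\<not> ?thesis"
    then have big: "\<And>x. x \<in> {a..b} \<Longrightarrow> \<bar>realiz \<theta> x\<bar> > 2 * Mf" by force
    have "integral {a..b} (\<lambda>x. (0 - f x)^2) \<le> E \<theta>"
      unfolding E_def
    proof (rule integral_le)
      show "(\<lambda>x. (0 - f x)^2) integrable_on {a..b}"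
        by (intro integrable_continuous_interval continuous_intros f_cont)
      show "(\<lambda>x. (realiz \<theta> x - f x)^2) integrable_on {a..b}"
        by (intro integrable_continuous_interval continuous_intros f_cont realiz_cont)
      fix x assume x: "x \<in> {a..b}"
      have "\<bar>f x\<bar> \<le> Mf" by (rule f_le_Mf[OF x])
      then have "\<bar>0 - f x\<bar> \<le> \<bar>realiz \<theta> x - f x\<bar>" using big[OF x] by linarith
      then show "(0 - f x)^2 \<le> (realiz \<theta> x - f x)^2"
        by (metis abs_ge_zero power_mono power2_abs)
    qed
    then show False using const_dev_ge[of 0] E by linarith
  qed
  then obtain x0 where x0: "x0 \<in> {a..b}" "\<bar>realiz \<theta> x0\<bar> \<le> 2 * Mf" by blast
  have bnd: "\<bar>realiz \<theta> x\<bar> \<le> 2 * Mf + (b - a) * \<bar>\<theta>$1 * \<theta>$3\<bar>" if x: "x \<in> {a..b}" for x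
  proof -
    have "\<bar>x - x0\<bar> \<le> b - a" using x x0 by auto
    then have "\<bar>\<theta>$1 * \<theta>$3\<bar> * \<bar>x - x0\<bar> \<le> \<bar>\<theta>$1 * \<theta>$3\<bar> * (b - a)" by (intro mult_left_mono) auto
    then have "\<bar>\<theta>$1 * \<theta>$3\<bar> * \<bar>x - x0\<bar> \<le> (b - a) * \<bar>\<theta>$1 * \<theta>$3\<bar>" by (simp add: mult.commute)
    moreover have "\<bar>realiz \<theta> x\<bar> \<le> \<bar>realiz \<theta> x0\<bar> + \<bar>realiz \<theta> x - realiz \<theta> x0\<bar>" by linarith
    ultimately show ?thesis using realiz_lip[of \<theta> x x0] x0(2) by linarith
  qed
  show "bdd_above ((\<lambda>x. \<bar>realiz \<theta> x\<bar>) ` {a..b})"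
    using bnd by (intro bdd_aboveI2) blast
  show "(SUP x\<in>{a..b}. \<bar>realiz \<theta> x\<bar>) \<le> 2 * (SUP x\<in>{a..b}. \<bar>f x\<bar>) + (b - a) * \<bar>\<theta>$1 * \<theta>$3\<bar>"
    unfolding Mf_def[symmetric] using bnd ab by (intro cSUP_least) auto
qed

end

lemma kink_ineq:
  fixes w bb v \<alpha> x y :: real
  shows "\<alpha> * (v * max (w*x+bb) 0 - v * max (w*y+bb) 0) * (x - y) \<le> max (\<alpha> * w * v) 0 * (x - y)^2"
proof -
  define D where "D = max (w*x+bb) 0 - max (w*y+bb) 0"
  have "\<exists>l. 0 \<le> l \<and> l \<le> 1 \<and> D = l * (w * (x - y))"
  proof (cases "(w*x+bb \<ge> 0) = (w*y+bb \<ge> 0)")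
    case True
    then show ?thesis
    proof (cases "w*x+bb \<ge> 0")
      case True
      then show ?thesis using \<open>(w*x+bb \<ge> 0) = (w*y+bb \<ge> 0)\<close> unfolding D_def
        by (intro exI[of _ 1]) (simp add: algebra_simps)
    next
      case False
      then show ?thesis using \<open>(w*x+bb \<ge> 0) = (w*y+bb \<ge> 0)\<close> unfolding D_def
        by (intro exI[of _ 0]) simp
    qed
  next
    case False
    have nz: "w * (x - y) \<noteq> 0" using False by (auto simp: algebra_simps)
    have eq: "D = D / (w * (x - y)) * (w * (x - y))"
      by (simp only: times_divide_eq_left nonzero_mult_div_cancel_right[OF nz])
    have wd: "w * (x - y) = (w*x+bb) - (w*y+bb)" by (simp add: algebra_simps)
    have "0 \<le> D / (w * (x - y)) \<and> D / (w * (x - y)) \<le> 1"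
    proof (cases "w*x+bb \<ge> 0")
      case True
      then have y: "w*y+bb < 0" using False by auto
      then have D: "D = w*x+bb" using True unfolding D_def by auto
      have p: "w * (x - y) > 0" using wd True y by linarith
      have "D \<le> 1 * (w * (x - y))" using D wd y by linarith
      then show ?thesis using True D p by (simp add: pos_divide_le_eq pos_le_divide_eq)
    next
      case c2: False
      then have y: "w*y+bb \<ge> 0" using False by auto
      then have D: "D = - (w*y+bb)" using c2 unfolding D_def by auto
      have n: "w * (x - y) < 0" using wd c2 y by linarith
      have "1 * (w * (x - y)) \<le> D" using D wd c2 by linarith
      moreover have "D \<le> 0 * (w * (x - y))" using D y by linarith
      ultimately show ?thesis using n by (simp add: neg_divide_le_eq neg_le_divide_eq)
    qed
    then show ?thesis using eq by blast
  qed
  then obtain l where l: "0 \<le> l" "l \<le> 1" "max (w*x+bb) 0 - max (w*y+bb) 0 = l * (w * (x - y))"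
    unfolding D_def by blast
  have "\<alpha> * (v * max (w*x+bb) 0 - v * max (w*y+bb) 0) * (x - y) = l * ((\<alpha> * w * v) * (x - y)^2)"
  proof -
    have "v * max (w*x+bb) 0 - v * max (w*y+bb) 0 = v * (max (w*x+bb) 0 - max (w*y+bb) 0)"
      by (simp add: right_diff_distrib)
    also have "\<dots> = v * (l * (w * (x - y)))" using l(3) by simp
    finally have e: "v * max (w*x+bb) 0 - v * max (w*y+bb) 0 = v * (l * (w * (x - y)))" .
    show ?thesis unfolding e by (simp add: power2_eq_square algebra_simps)
  qed
  also have "\<dots> \<le> l * (max (\<alpha> * w * v) 0 * (x - y)^2)" using l by (intro mult_left_mono mult_right_mono) auto
  also have "\<dots> \<le> 1 * (max (\<alpha> * w * v) 0 * (x - y)^2)" using l by (intro mult_right_mono) auto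
  finally show ?thesis by simp
qed

context stat begin

lemma affine_pos:
  assumes aff: "\<forall>x\<in>{a..b}. f x = \<alpha> * x + \<beta>" and E: "E \<theta> \<le> L'" and L': "L' < m0"
  shows "\<alpha> * \<theta>$1 * \<theta>$3 \<ge> 6 * (m0 - L') / (b - a)^3"
proof -
  define xm where "xm = (a + b) / 2"
  define K where "K = max (\<alpha> * \<theta>$1 * \<theta>$3) 0"
  define N where "N = realiz \<theta>"
  have ab': "a \<le> b" using ab by simp
  have m1: "((\<lambda>x. (x - xm)^2) has_integral ((b - a)^3/12)) {a..b}" unfolding xm_def by (rule mid_int(1)[OF ab'])
  have m2: "((\<lambda>x. x - xm) has_integral 0) {a..b}" unfolding xm_def by (rule mid_int(2)[OF ab'])
  have c: "((\<lambda>x. \<alpha> * xm + \<beta>) has_integral (\<alpha> * xm + \<beta>) * (b - a)) {a..b}"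
    using has_integral_const_real[of "\<alpha> * xm + \<beta>" a b] ab by (simp add: mult.commute)
  have fint: "((\<lambda>x. \<alpha> * (x - xm) + (\<alpha> * xm + \<beta>)) has_integral (\<alpha> * 0 + (\<alpha> * xm + \<beta>) * (b - a))) {a..b}"
    by (intro has_integral_add has_integral_mult_right m2 c)
  have "integral {a..b} f = integral {a..b} (\<lambda>x. \<alpha> * (x - xm) + (\<alpha> * xm + \<beta>))"
    by (rule integral_cong) (use aff in \<open>simp add: algebra_simps\<close>)
  also have "\<dots> = (\<alpha> * xm + \<beta>) * (b - a)" using fint by (simp add: integral_unique)
  finally have mu: "mu = \<alpha> * xm + \<beta>" unfolding mu_def using ab by simp
  have fm: "f x - mu = \<alpha> * (x - xm)" if "x \<in> {a..b}" for x
    using aff that mu by (simp add: algebra_simps)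
  have pw: "(f x - mu)^2 - 2 * K * (x - xm)^2 - 2 * (\<alpha> * (N xm - mu)) * (x - xm) \<le> (N x - f x)^2"
    if x: "x \<in> {a..b}" for x
  proof -
    have k: "\<alpha> * (N x - N xm) * (x - xm) \<le> K * (x - xm)^2"
      unfolding N_def realiz_def K_def
      using kink_ineq[of \<alpha> "\<theta>$3" "\<theta>$1" x "\<theta>$2" xm] by (simp add: algebra_simps)
    have "(N x - f x)^2 = (N x - mu)^2 - 2 * (N x - mu) * (f x - mu) + (f x - mu)^2"
      by (simp add: power2_eq_square algebra_simps)
    moreover have "(N x - mu) * (f x - mu) = \<alpha> * (N x - N xm) * (x - xm) + \<alpha> * (N xm - mu) * (x - xm)"
      unfolding fm[OF x] by (simp add: algebra_simps)
    moreover have "(N x - mu)^2 \<ge> 0" by simp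
    moreover have "2 * (\<alpha> * (N xm - mu)) * (x - xm) = 2 * (\<alpha> * (N xm - mu) * (x - xm))" by simp
    moreover have "2 * K * (x - xm)^2 = 2 * (K * (x - xm)^2)" by simp
    ultimately show ?thesis using k by linarith
  qed
  have hq: "((\<lambda>x. (f x - mu)^2) has_integral m0) {a..b}"
    unfolding m0_def by (intro integrable_integral integrable_continuous_interval continuous_intros f_cont)
  have hl: "((\<lambda>x. (f x - mu)^2 - 2 * K * (x - xm)^2 - 2 * (\<alpha> * (N xm - mu)) * (x - xm)) has_integral
             (m0 - 2 * K * ((b - a)^3/12) - 2 * (\<alpha> * (N xm - mu)) * 0)) {a..b}"
    by (intro has_integral_diff has_integral_mult_right hq m1 m2)
  have hE: "((\<lambda>x. (N x - f x)^2) has_integral E \<theta>) {a..b}"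
    unfolding E_def N_def by (intro integrable_integral integrable_continuous_interval continuous_intros f_cont realiz_cont)
  have "m0 - 2 * K * ((b - a)^3/12) - 2 * (\<alpha> * (N xm - mu)) * 0 \<le> E \<theta>"
    by (rule has_integral_le[OF hl hE pw])
  then have "m0 - L' \<le> K * (b - a)^3 / 6" using E by simp
  moreover have "(b - a)^3 > 0" using ab by simp
  ultimately have Kb: "K \<ge> 6 * (m0 - L') / (b - a)^3" by (simp add: field_simps)
  moreover have "6 * (m0 - L') / (b - a)^3 > 0" using L' \<open>(b - a)^3 > 0\<close> by simp
  ultimately have "K > 0" by linarith
  then have "K = \<alpha> * \<theta>$1 * \<theta>$3" unfolding K_def by (simp add: max_def split: if_splits)
  then show ?thesis using Kb by simp
qed

end

lemma arith_core:
  fixes la lb c PP M D eps AA s :: real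
  assumes la: "la \<ge> 0" and lb: "lb \<ge> 0" and D: "la + lb = D" "D > 0"
    and cl: "c^2 * la \<le> PP" and AA: "AA \<ge> eps" "AA \<le> lb * (\<bar>c\<bar> + M)^2"
    and sl: "s^2 * lb^3 / 12 \<le> PP" and eps: "eps > 0" and M: "M \<ge> 0" and PP: "PP \<ge> 0"
  shows "s^2 \<le> 12 * PP / (min (D/2) (eps / (4 * PP / D + 2 * M^2 + 1)))^3"
proof -
  define W where "W = 4 * PP / D + 2 * M^2 + 1"
  define lm where "lm = min (D/2) (eps / W)"
  have W: "W > 0" unfolding W_def using PP D by (simp add: add_nonneg_pos)
  have lm: "lm > 0" unfolding lm_def using W eps D by simp
  have l1lm: "lb \<ge> lm"
  proof (cases "la \<ge> D/2")
    case True
    then have "c^2 * (D/2) \<le> PP" using cl by (meson mult_left_mono order_trans zero_le_power2)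
    then have c2: "c^2 \<le> 2 * PP / D" using D by (simp add: field_simps)
    have "(\<bar>c\<bar> + M)^2 \<le> 2 * c^2 + 2 * M^2"
    proof -
      have "0 \<le> (\<bar>c\<bar> - M)^2" by simp
      then show ?thesis by (simp add: power2_eq_square algebra_simps)
    qed
    also have "\<dots> < W" using c2 unfolding W_def by simp
    finally have cw: "(\<bar>c\<bar> + M)^2 < W" .
    have "eps \<le> lb * W" using AA cw lb by (smt (verit) mult_left_mono)
    then have "eps / W \<le> lb" using W by (simp add: field_simps)
    then show ?thesis unfolding lm_def by linarith
  next
    case False
    then show ?thesis unfolding lm_def using D by linarith
  qed
  have "lm^3 \<le> lb^3" using l1lm lm by (intro power_mono) auto
  then have "s^2 * lm^3 \<le> s^2 * lb^3" by (intro mult_left_mono) auto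
  also have "\<dots> \<le> 12 * PP" using sl by simp
  finally have "s^2 * lm^3 \<le> 12 * PP" .
  then have "s^2 \<le> 12 * PP / lm^3" using lm by (simp add: field_simps)
  then show ?thesis unfolding lm_def W_def .
qed

context stat begin

definition "P2 L' = 2 * L' + 2 * integral {a..b} (\<lambda>x. (f x)^2)"
definition "Sb L' = 12 * P2 L' / (min ((b - a)/2) ((m0 - L') / (4 * P2 L' / (b - a) + 2 * Mf^2 + 1)))^3"

lemma slope_core:
  assumes I0: "u0 \<le> v0" and I1: "u1 \<le> v1" and len: "(v0 - u0) + (v1 - u1) = b - a"
    and split: "\<And>g :: real \<Rightarrow> real. continuous_on {a..b} g \<Longrightarrow> integral {a..b} g = integral {u0..v0} g + integral {u1..v1} g"
    and sub: "{u0..v0} \<subseteq> {a..b}" "{u1..v1} \<subseteq> {a..b}"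
    and N0: "\<And>x. x \<in> {u0<..<v0} \<Longrightarrow> realiz \<theta> x = c"
    and N1: "\<And>x. x \<in> {u1<..<v1} \<Longrightarrow> realiz \<theta> x = c' + s * x"
    and E: "E \<theta> \<le> L'" and L': "L' < m0"
  shows "s^2 \<le> Sb L'"
proof -
  define N where "N = realiz \<theta>"
  have cN: "continuous_on S N" for S unfolding N_def by (rule realiz_cont)
  have cf0: "continuous_on {u0..v0} f" "continuous_on {u1..v1} f"
    using continuous_on_subset[OF f_cont] sub by auto
  have L0: "L' \<ge> 0" using E E_nonneg[of \<theta>] by linarith
  have P2: "P2 L' \<ge> 0" unfolding P2_def using L0
    by (intro add_nonneg_nonneg mult_nonneg_nonneg integral_nonneg integrable_continuous_interval continuous_intros f_cont) auto
  have neg: "negligible {u, v}" for u v :: real by (rule negligible_finite) simp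
  have int_eq0: "integral {u0..v0} (\<lambda>x. H x (N x)) = integral {u0..v0} (\<lambda>x. H x c)" for H
    by (rule integral_spike[OF neg[of u0 v0]]) (auto simp: N_def N0)
  have int_eq1: "integral {u1..v1} (\<lambda>x. H x (N x)) = integral {u1..v1} (\<lambda>x. H x (c' + s * x))" for H
    by (rule integral_spike[OF neg[of u1 v1]]) (auto simp: N_def N1)
  have sN: "integral {a..b} (\<lambda>x. (N x)^2) = integral {u0..v0} (\<lambda>x. (N x)^2) + integral {u1..v1} (\<lambda>x. (N x)^2)"
    by (rule split) (intro continuous_intros cN)
  have N0sq: "integral {u0..v0} (\<lambda>x. (N x)^2) = c^2 * (v0 - u0)"
    using int_eq0[of "\<lambda>x y. y^2"] I0 by simp
  have N1sq: "integral {u1..v1} (\<lambda>x. (N x)^2) \<ge> s^2 * (v1 - u1)^3 / 12"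
    using int_eq1[of "\<lambda>x y. y^2"] affine_sq[OF I1, where c=c' and s=s] by simp
  have N0nn: "integral {u0..v0} (\<lambda>x. (N x)^2) \<ge> 0" "integral {u1..v1} (\<lambda>x. (N x)^2) \<ge> 0"
    by (intro integral_nonneg integrable_continuous_interval continuous_intros cN; simp)+
  have Nb: "integral {a..b} (\<lambda>x. (N x)^2) \<le> P2 L'"
  proof -
    have "integral {a..b} (\<lambda>x. (N x)^2) \<le> integral {a..b} (\<lambda>x. 2 * (N x - f x)^2 + 2 * (f x)^2)"
    proof (rule integral_le)
      show "(\<lambda>x. (N x)^2) integrable_on {a..b}" by (intro integrable_continuous_interval continuous_intros cN)
      show "(\<lambda>x. 2 * (N x - f x)^2 + 2 * (f x)^2) integrable_on {a..b}"
        by (intro integrable_continuous_interval continuous_intros cN f_cont)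
      fix x
      have "0 \<le> (N x - 2 * f x)^2" by simp
      then show "(N x)^2 \<le> 2 * (N x - f x)^2 + 2 * (f x)^2" by (simp add: power2_eq_square algebra_simps)
    qed
    also have "\<dots> = 2 * E \<theta> + 2 * integral {a..b} (\<lambda>x. (f x)^2)"
    proof -
      have i1: "(\<lambda>x. (N x - f x)^2) integrable_on {a..b}" by (intro integrable_continuous_interval continuous_intros cN f_cont)
      have i2: "(\<lambda>x. (f x)^2) integrable_on {a..b}" by (intro integrable_continuous_interval continuous_intros f_cont)
      show ?thesis using integral_add[OF integrable_cmul[OF i1, of 2] integrable_cmul[OF i2, of 2]]
        by (simp add: E_def N_def)
    qed
    also have "\<dots> \<le> P2 L'" unfolding P2_def using E by simp
    finally show ?thesis .
  qed
  define A0 where "A0 = integral {u0..v0} (\<lambda>x. (c - f x)^2)"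
  define A1 where "A1 = integral {u1..v1} (\<lambda>x. (c - f x)^2)"
  have sE: "E \<theta> = integral {u0..v0} (\<lambda>x. (N x - f x)^2) + integral {u1..v1} (\<lambda>x. (N x - f x)^2)"
    unfolding E_def N_def[symmetric] by (rule split) (intro continuous_intros cN f_cont)
  have E0: "integral {u0..v0} (\<lambda>x. (N x - f x)^2) = A0"
    unfolding A0_def using int_eq0[of "\<lambda>x y. (y - f x)^2"] by simp
  have E1: "integral {u1..v1} (\<lambda>x. (N x - f x)^2) \<ge> 0"
    by (intro integral_nonneg integrable_continuous_interval continuous_intros cN cf0) auto
  have A0L: "A0 \<le> L'" using sE E0 E1 E by linarith
  have sC: "integral {a..b} (\<lambda>x. (c - f x)^2) = A0 + A1"
    unfolding A0_def A1_def by (rule split) (intro continuous_intros f_cont)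
  have A1e: "A1 \<ge> m0 - L'" using sC const_dev_ge[of c] A0L by linarith
  have A1b: "A1 \<le> (v1 - u1) * (\<bar>c\<bar> + Mf)^2"
  proof -
    have "A1 \<le> integral {u1..v1} (\<lambda>x. (\<bar>c\<bar> + Mf)^2)"
      unfolding A1_def
    proof (rule integral_le)
      show "(\<lambda>x. (c - f x)^2) integrable_on {u1..v1}" by (intro integrable_continuous_interval continuous_intros cf0)
      show "(\<lambda>x. (\<bar>c\<bar> + Mf)^2) integrable_on {u1..v1}" by (rule integrable_const_ivl)
      fix x assume x: "x \<in> {u1..v1}"
      then have "\<bar>f x\<bar> \<le> Mf" using f_le_Mf sub by auto
      then have "\<bar>c - f x\<bar> \<le> \<bar>c\<bar> + Mf" by linarith
      then show "(c - f x)^2 \<le> (\<bar>c\<bar> + Mf)^2" by (metis abs_ge_zero power_mono power2_abs)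
    qed
    also have "\<dots> = (v1 - u1) * (\<bar>c\<bar> + Mf)^2" using I1 by simp
    finally show ?thesis .
  qed
  show ?thesis unfolding Sb_def
  proof (rule arith_core[where la="v0 - u0" and lb="v1 - u1" and c=c and PP="P2 L'" and M=Mf and D="b - a" and eps="m0 - L'" and AA=A1 and s=s])
    show "0 \<le> v0 - u0" "0 \<le> v1 - u1" using I0 I1 by auto
    show "v0 - u0 + (v1 - u1) = b - a" by (rule len)
    show "0 < b - a" using ab by simp
    show "c^2 * (v0 - u0) \<le> P2 L'" using sN N0sq N0nn Nb by linarith
    show "m0 - L' \<le> A1" by (rule A1e)
    show "A1 \<le> (v1 - u1) * (\<bar>c\<bar> + Mf)^2" by (rule A1b)
    show "s^2 * (v1 - u1)^3 / 12 \<le> P2 L'" using sN N1sq N0nn Nb by linarith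
    show "0 < m0 - L'" using L' by simp
    show "0 \<le> Mf" by (rule Mf_nonneg)
    show "0 \<le> P2 L'" by (rule P2)
  qed
qed

lemma slope_bound:
  assumes E: "E \<theta> \<le> L'" and L': "L' < m0"
  shows "(\<theta>$1 * \<theta>$3)^2 \<le> Sb L'"
proof -
  define w where "w = \<theta>$1"
  define bb where "bb = \<theta>$2"
  define v where "v = \<theta>$3"
  define c where "c = \<theta>$4"
  have Nform: "realiz \<theta> x = v * max (w * x + bb) 0 + c" for x unfolding realiz_def w_def bb_def v_def c_def by simp
  have split: "integral {a..b} g = integral {a..p} g + integral {p..b} g" if "continuous_on {a..b} g" "p \<in> {a..b}" for g :: "real \<Rightarrow> real" and p
    using Henstock_Kurzweil_Integration.integral_combine[of a p b g] integrable_continuous_interval[OF that(1)] that(2) by auto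
  have split': "integral {a..b} g = integral {p..b} g + integral {a..p} g" if "continuous_on {a..b} g" "p \<in> {a..b}" for g :: "real \<Rightarrow> real" and p
    using split[OF that] by simp
  consider "w = 0" | "w > 0" | "w < 0" by linarith
  then show ?thesis
  proof cases
    case 1
    have "0 \<le> Sb L'"
    proof -
      have "(0::real)^2 \<le> Sb L'"
        apply (rule slope_core[of a a a b \<theta> "v * max bb 0 + c" "v * max bb 0 + c" 0 L'])
        using ab E L' 1 by (auto simp: split Nform)
      then show ?thesis by simp
    qed
    then show ?thesis using 1 unfolding w_def by simp
  next
    case 2
    define k where "k = - bb / w"
    define p where "p = max a (min k b)"
    have p: "p \<in> {a..b}" unfolding p_def using ab by auto
    have "(w * v)^2 \<le> Sb L'"
    proof (rule slope_core[of a p p b \<theta> c "v * bb + c" "w * v" L'])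
      show "a \<le> p" "p \<le> b" using p by auto
      show "p - a + (b - p) = b - a" by simp
      show "\<And>g :: real \<Rightarrow> real. continuous_on {a..b} g \<Longrightarrow> integral {a..b} g = integral {a..p} g + integral {p..b} g"
        using split p by blast
      show "{a..p} \<subseteq> {a..b}" "{p..b} \<subseteq> {a..b}" using p by auto
      show "realiz \<theta> x = c" if x: "x \<in> {a<..<p}" for x
      proof -
        have "x < k" using x unfolding p_def by auto
        then have "w * x < w * k" using 2 by simp
        then have "w * x + bb < 0" unfolding k_def using 2 by simp
        then show ?thesis unfolding Nform by simp
      qed
      show "realiz \<theta> x = v * bb + c + w * v * x" if x: "x \<in> {p<..<b}" for x
      proof -
        have "x > k" using x unfolding p_def by auto
        then have "w * x > w * k" using 2 by simp
        then have "w * x + bb > 0" unfolding k_def using 2 by simp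
        then show ?thesis unfolding Nform by (simp add: algebra_simps)
      qed
      show "E \<theta> \<le> L'" "L' < m0" by (rule E, rule L')
    qed
    then show ?thesis unfolding w_def v_def by simp
  next
    case 3
    define k where "k = - bb / w"
    define q where "q = min b (max k a)"
    have q: "q \<in> {a..b}" unfolding q_def using ab by auto
    have "(w * v)^2 \<le> Sb L'"
    proof (rule slope_core[of q b a q \<theta> c "v * bb + c" "w * v" L'])
      show "q \<le> b" "a \<le> q" using q by auto
      show "b - q + (q - a) = b - a" by simp
      show "\<And>g :: real \<Rightarrow> real. continuous_on {a..b} g \<Longrightarrow> integral {a..b} g = integral {q..b} g + integral {a..q} g"
        using split' q by blast
      show "{q..b} \<subseteq> {a..b}" "{a..q} \<subseteq> {a..b}" using q by auto
      show "realiz \<theta> x = c" if x: "x \<in> {q<..<b}" for x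
      proof -
        have "x > k" using x unfolding q_def by auto
        then have "w * x < w * k" using 3 by simp
        then have "w * x + bb < 0" unfolding k_def using 3 by simp
        then show ?thesis unfolding Nform by simp
      qed
      show "realiz \<theta> x = v * bb + c + w * v * x" if x: "x \<in> {a<..<q}" for x
      proof -
        have "x < k" using x unfolding q_def by auto
        then have "w * x > w * k" using 3 by simp
        then have "w * x + bb > 0" unfolding k_def using 3 by simp
        then show ?thesis unfolding Nform by (simp add: algebra_simps)
      qed
      show "E \<theta> \<le> L'" "L' < m0" by (rule E, rule L')
    qed
    then show ?thesis unfolding w_def v_def by simp
  qed
qed

end

context setting begin

lemma loss_lim: "(\<lambda>k. loss_act (R (Suc k)) \<rho> a b f \<theta>) \<longlonglongrightarrow> loss \<rho> a b f \<theta>"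
proof -
  define X where "X = \<bar>\<theta>$1\<bar> * (\<bar>a\<bar> + \<bar>b\<bar>) + \<bar>\<theta>$2\<bar>"
  obtain C where C: "\<forall>r\<ge>1. \<forall>y. \<bar>y\<bar> \<le> X \<longrightarrow> \<bar>R r y\<bar> \<le> C \<and> \<bar>R' r y\<bar> \<le> C" using R_bnd by blast
  obtain M where M: "M > 0" "\<forall>t\<in>{a..b}. \<bar>f t\<bar> \<le> M" using f_bnd by blast
  define h where "h = (\<bar>\<theta>$3\<bar> * C + \<bar>\<theta>$4\<bar> + M)^2"
  have cR: "continuous_on UNIV (R (Suc k))" for k
    using Rs_deriv by (meson DERIV_isCont continuous_at_imp_continuous_on)
  have int: "(\<lambda>x. (\<theta>$3 * R (Suc k) (\<theta>$1 * x + \<theta>$2) + \<theta>$4 - f x)^2) integrable_on {a..b}" for k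
  proof -
    have "continuous_on {a..b} (\<lambda>x. R (Suc k) (\<theta>$1 * x + \<theta>$2))"
      by (rule continuous_on_compose2[OF cR[of k]]) (auto intro!: continuous_intros)
    then show ?thesis by (intro integrable_continuous_interval continuous_intros f_cont)
  qed
  have le: "norm ((\<theta>$3 * R (Suc k) (\<theta>$1 * x + \<theta>$2) + \<theta>$4 - f x)^2) \<le> h" if x: "x \<in> {a..b}" for k x
  proof -
    have "\<bar>\<theta>$1 * x + \<theta>$2\<bar> \<le> \<bar>\<theta>$1\<bar> * \<bar>x\<bar> + \<bar>\<theta>$2\<bar>" by (metis abs_mult abs_triangle_ineq)
    also have "\<dots> \<le> X" unfolding X_def using x by (intro add_mono mult_left_mono) auto
    finally have "\<bar>R (Suc k) (\<theta>$1 * x + \<theta>$2)\<bar> \<le> C" using C by auto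
    then have "\<bar>\<theta>$3 * R (Suc k) (\<theta>$1 * x + \<theta>$2)\<bar> \<le> \<bar>\<theta>$3\<bar> * C" by (simp add: abs_mult mult_left_mono)
    moreover have "\<bar>f x\<bar> \<le> M" using M x by auto
    moreover have "\<bar>\<theta>$3 * R (Suc k) (\<theta>$1 * x + \<theta>$2) + \<theta>$4 - f x\<bar> \<le> \<bar>\<theta>$3 * R (Suc k) (\<theta>$1 * x + \<theta>$2) + \<theta>$4\<bar> + \<bar>f x\<bar>"
      by (rule abs_triangle_ineq4)
    moreover have "\<bar>\<theta>$3 * R (Suc k) (\<theta>$1 * x + \<theta>$2) + \<theta>$4\<bar> \<le> \<bar>\<theta>$3 * R (Suc k) (\<theta>$1 * x + \<theta>$2)\<bar> + \<bar>\<theta>$4\<bar>"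
      by (rule abs_triangle_ineq)
    ultimately have "\<bar>\<theta>$3 * R (Suc k) (\<theta>$1 * x + \<theta>$2) + \<theta>$4 - f x\<bar> \<le> \<bar>\<theta>$3\<bar> * C + \<bar>\<theta>$4\<bar> + M"
      by linarith
    then show ?thesis unfolding h_def real_norm_def by (metis abs_ge_zero abs_power2 power_mono power2_abs)
  qed
  have conv: "(\<lambda>k. (\<theta>$3 * R (Suc k) (\<theta>$1 * x + \<theta>$2) + \<theta>$4 - f x)^2) \<longlonglongrightarrow> (realiz \<theta> x - f x)^2" for x
    unfolding realiz_def using R_conv(1)[of "\<theta>$1 * x + \<theta>$2"] unfolding relu_def
    by (intro tendsto_intros)
  note dc = dominated_convergence(2)[OF int integrable_const_ivl[of h a b] le conv]
  show ?thesis unfolding loss_act_def loss_def by (intro tendsto_intros dc)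
qed

end

locale flowloc = setting +
  fixes G :: "real^4 \<Rightarrow> real^4" and \<Theta> :: "real \<Rightarrow> real^4"
  assumes G_def: "\<forall>\<theta>. convergent (\<lambda>r. grad (loss_act (R r) \<rho> a b f) \<theta>)
                  \<longrightarrow> G \<theta> = lim (\<lambda>r. grad (loss_act (R r) \<rho> a b f) \<theta>)"
    and G_locbdd: "\<forall>K. compact K \<longrightarrow> bounded (G ` K)"
    and Theta_cont: "continuous_on {0..} \<Theta>"
    and Theta_flow: "\<forall>t\<ge>0. ((\<lambda>s. G (\<Theta> s)) has_integral (\<Theta> 0 - \<Theta> t)) {0..t}"
begin

lemma GG: "G \<theta> = integral {a..b} (dv relu ind \<rho> f \<theta>)"
  by (rule G_eq[OF G_def])

lemma cT: "continuous_on {0..T} \<Theta>"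
  by (rule continuous_on_subset[OF Theta_cont]) auto

lemma flowT: "t \<in> {0..T} \<Longrightarrow> ((\<lambda>s. G (\<Theta> s)) has_integral (\<Theta> 0 - \<Theta> t)) {0..t}"
  using Theta_flow by auto

lemma GB: "\<exists>B. \<forall>s\<in>{0..T}. norm (G (\<Theta> s)) \<le> B"
proof -
  have "compact (\<Theta> ` {0..T})" by (rule compact_continuous_image[OF cT]) simp
  then have "bounded (G ` \<Theta> ` {0..T})" using G_locbdd by blast
  then obtain B where "\<forall>x\<in>G ` \<Theta> ` {0..T}. norm x \<le> B" unfolding bounded_iff by blast
  then show ?thesis by auto
qed

lemma ThB: "\<exists>Q. \<forall>s\<in>{0..T}. norm (\<Theta> s) \<le> Q"
proof -
  have "compact (\<Theta> ` {0..T})" by (rule compact_continuous_image[OF cT]) simp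
  then have "bounded (\<Theta> ` {0..T})" by (rule compact_imp_bounded)
  then show ?thesis unfolding bounded_iff by auto
qed

definition "phi \<theta> = (\<theta>$1)^2 + (\<theta>$2)^2 - (\<theta>$3)^2"
definition "Dphi \<theta> = vec4 (2 * \<theta>$1) (2 * \<theta>$2) (- 2 * \<theta>$3) 0"

lemma phi_deriv: "(phi has_derivative (\<lambda>h. h \<bullet> Dphi \<theta>)) (at \<theta>)"
  unfolding phi_def Dphi_def
  apply (rule has_derivative_eq_rhs)
   apply (rule has_derivative_diff has_derivative_add has_derivative_power hd_nth)+
  apply (simp add: inner4 fun_eq_iff algebra_simps)
  done

lemma Dphi_cont: "continuous_on UNIV Dphi"
  unfolding Dphi_def by (intro continuous_intros)

lemma Dphi_G: "Dphi \<theta> \<bullet> G \<theta> = 0"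
proof -
  have int: "dv relu ind \<rho> f \<theta> integrable_on {a..b}" by (rule grad_lim(1))
  have "Dphi \<theta> \<bullet> G \<theta> = integral {a..b} (\<lambda>x. Dphi \<theta> \<bullet> dv relu ind \<rho> f \<theta> x)"
    unfolding GG using integral_linear[OF int bounded_linear_inner_right[of "Dphi \<theta>"]] by (simp add: o_def)
  also have "\<dots> = integral {a..b} (\<lambda>x. 0)"
  proof (rule integral_cong)
    fix x
    define z where "z = \<theta>$1 * x + \<theta>$2"
    have iz: "ind z * z = relu z" unfolding ind_def relu_def by (simp add: indicator_def max_def)
    have "Dphi \<theta> \<bullet> dv relu ind \<rho> f \<theta> x = 4 * \<rho> * (\<theta>$3 * relu z + \<theta>$4 - f x) * \<theta>$3 * (ind z * z - relu z)"
      unfolding Dphi_def dv_def z_def[symmetric] by (simp add: inner4 z_def algebra_simps)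
    then show "Dphi \<theta> \<bullet> dv relu ind \<rho> f \<theta> x = 0" using iz by simp
  qed
  finally show ?thesis by simp
qed

lemma conservation:
  assumes T: "T \<ge> 0"
  shows "phi (\<Theta> T) = phi (\<Theta> 0)"
proof -
  obtain B where B: "\<forall>s\<in>{0..T}. norm (G (\<Theta> s)) \<le> B" using GB by blast
  have "phi (\<Theta> T) - phi (\<Theta> 0) = - integral {0..T} (\<lambda>s. Dphi (\<Theta> s) \<bullet> G (\<Theta> s))"
    by (rule chain_flow(1)[OF phi_deriv Dphi_cont cT flowT _ T]) (use B in auto)
  also have "\<dots> = 0" by (simp add: Dphi_G)
  finally show ?thesis by simp
qed

definition "Dk k \<theta> = integral {a..b} (dv (R (Suc k)) (R' (Suc k)) \<rho> f \<theta>)"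

lemma Dk_deriv: "(loss_act (R (Suc k)) \<rho> a b f has_derivative (\<lambda>h. h \<bullet> Dk k \<theta>)) (at \<theta>)"
proof -
  have "GDERIV (loss_act (R (Suc k)) \<rho> a b f) \<theta> :> integral {a..b} (dv (R (Suc k)) (R' (Suc k)) \<rho> f \<theta>)"
    by (rule gderiv_act[OF _ Rs_deriv Rs_cont f_cont]) (use ab in simp)
  then show ?thesis unfolding gderiv_def Dk_def .
qed

lemma Dk_cont: "continuous_on UNIV (Dk k)"
proof -
  have c: "continuous_on (UNIV \<times> cbox a b) (\<lambda>(\<theta>, t). dv (R (Suc k)) (R' (Suc k)) \<rho> f \<theta> t)"
    using cont_dv[OF Rs_deriv Rs_cont f_cont] by simp
  show ?thesis unfolding Dk_def using integral_continuous_on_param[OF c] by simp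
qed

lemma loss_mono:
  assumes T: "T \<ge> 0"
  shows "loss \<rho> a b f (\<Theta> T) \<le> loss \<rho> a b f (\<Theta> 0)"
proof -
  obtain B where B: "\<forall>s\<in>{0..T}. norm (G (\<Theta> s)) \<le> B" using GB by blast
  obtain Q where Q: "\<forall>s\<in>{0..T}. norm (\<Theta> s) \<le> Q" using ThB by blast
  obtain K where K: "\<forall>\<theta> t. norm \<theta> \<le> Q \<longrightarrow> t \<in> {a..b} \<longrightarrow>
   (\<forall>r\<ge>1. norm (dv (R r) (R' r) \<rho> f \<theta> t) \<le> K) \<and> norm (dv relu ind \<rho> f \<theta> t) \<le> K"
    using dv_bnd by blast
  have ch: "loss_act (R (Suc k)) \<rho> a b f (\<Theta> T) - loss_act (R (Suc k)) \<rho> a b f (\<Theta> 0)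
       = - integral {0..T} (\<lambda>s. Dk k (\<Theta> s) \<bullet> G (\<Theta> s))"
    and chi: "(\<lambda>s. Dk k (\<Theta> s) \<bullet> G (\<Theta> s)) integrable_on {0..T}" for k
    by (rule chain_flow[OF Dk_deriv Dk_cont cT flowT _ T], use B in auto)+
  have Dkb: "norm (Dk k (\<Theta> s)) \<le> K * (b - a)" if s: "s \<in> {0..T}" for k s
  proof -
    have "norm (Dk k (\<Theta> s)) \<le> integral {a..b} (\<lambda>_. K)"
      unfolding Dk_def
      by (rule integral_norm_bound_integral[OF dv_int integrable_const_ivl]) (use K Q s in auto)
    then show ?thesis using ab by (simp add: mult.commute)
  qed
  have le: "norm (Dk k (\<Theta> s) \<bullet> G (\<Theta> s)) \<le> K * (b - a) * B" if s: "s \<in> {0..T}" for k s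
  proof -
    have "norm (Dk k (\<Theta> s) \<bullet> G (\<Theta> s)) \<le> norm (Dk k (\<Theta> s)) * norm (G (\<Theta> s))"
      unfolding real_norm_def by (rule Cauchy_Schwarz_ineq2)
    also have "\<dots> \<le> K * (b - a) * B"
    proof -
      have "0 \<le> K * (b - a)" using Dkb[OF s, of 0] by (meson norm_ge_zero order_trans)
      then show ?thesis using Dkb[OF s] B s by (intro mult_mono) auto
    qed
    finally show ?thesis .
  qed
  have conv: "(\<lambda>k. Dk k (\<Theta> s) \<bullet> G (\<Theta> s)) \<longlonglongrightarrow> G (\<Theta> s) \<bullet> G (\<Theta> s)" for s
  proof -
    have "(\<lambda>k. Dk k (\<Theta> s)) \<longlonglongrightarrow> G (\<Theta> s)" unfolding Dk_def GG by (rule grad_lim(2))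
    then show ?thesis by (intro tendsto_intros)
  qed
  note dc = dominated_convergence[OF chi integrable_const_ivl[of "K * (b - a) * B" 0 T] le conv]
  have l1: "(\<lambda>k. loss_act (R (Suc k)) \<rho> a b f (\<Theta> T) - loss_act (R (Suc k)) \<rho> a b f (\<Theta> 0))
       \<longlonglongrightarrow> loss \<rho> a b f (\<Theta> T) - loss \<rho> a b f (\<Theta> 0)"
    by (intro tendsto_intros loss_lim)
  have l2: "(\<lambda>k. loss_act (R (Suc k)) \<rho> a b f (\<Theta> T) - loss_act (R (Suc k)) \<rho> a b f (\<Theta> 0))
       \<longlonglongrightarrow> - integral {0..T} (\<lambda>s. G (\<Theta> s) \<bullet> G (\<Theta> s))"
    unfolding ch by (intro tendsto_intros dc(2))
  have "loss \<rho> a b f (\<Theta> T) - loss \<rho> a b f (\<Theta> 0) = - integral {0..T} (\<lambda>s. G (\<Theta> s) \<bullet> G (\<Theta> s))"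
    using LIMSEQ_unique[OF l1 l2] .
  moreover have "integral {0..T} (\<lambda>s. G (\<Theta> s) \<bullet> G (\<Theta> s)) \<ge> 0"
    by (rule integral_nonneg[OF dc(1)]) (simp_all add: inner_ge_zero)
  ultimately show ?thesis by linarith
qed

end

theorem lemma6p2:
  fixes a b \<rho> :: real and f :: "real \<Rightarrow> real"
    and R R' :: "nat \<Rightarrow> real \<Rightarrow> real"
    and G :: "real^4 \<Rightarrow> real^4"
    and \<Theta> :: "real \<Rightarrow> real^4"
  assumes ab: "a < b" and rho: "\<rho> > 0"
    and f_cont: "continuous_on {a..b} f"
    and R_deriv: "\<forall>r\<ge>1. \<forall>x. (R r has_real_derivative R' r x) (at x)"
    and R'_cont: "\<forall>r\<ge>1. continuous_on UNIV (R' r)"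
    and R_lim: "\<forall>x. (\<lambda>r. \<bar>R r x - max x 0\<bar> + \<bar>R' r x - indicator {0<..} x\<bar>) \<longlonglongrightarrow> 0"
    and R_bdd: "\<forall>x. \<exists>C. \<forall>r\<ge>1. \<forall>y\<in>{-\<bar>x\<bar>..\<bar>x\<bar>}. \<bar>R r y\<bar> + \<bar>R' r y\<bar> \<le> C"
    and G_def: "\<forall>\<theta>. convergent (\<lambda>r. grad (loss_act (R r) \<rho> a b f) \<theta>)
                  \<longrightarrow> G \<theta> = lim (\<lambda>r. grad (loss_act (R r) \<rho> a b f) \<theta>)"
    and G_meas: "G \<in> borel_measurable borel"
    and G_locbdd: "\<forall>K. compact K \<longrightarrow> bounded (G ` K)"
    and Theta_cont: "continuous_on {0..} \<Theta>"
    and Theta_flow: "\<forall>t\<ge>0. ((\<lambda>s. G (\<Theta> s)) has_integral (\<Theta> 0 - \<Theta> t)) {0..t}"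
    and init: "loss \<rho> a b f (\<Theta> 0) <
               \<rho> * integral {a..b} (\<lambda>x. (f x - (1 / (b - a)) * integral {a..b} f)^2)"
  shows
    "bdd_above ((\<lambda>t. \<bar>\<Theta> t $ 1 * \<Theta> t $ 3\<bar>) ` {0..})
     \<and> (bdd_above ((\<lambda>t. \<bar>\<Theta> t $ 1\<bar>) ` {0..})
        \<and> bdd_above ((\<lambda>t. max 1 ((\<Theta> 0 $ 1)^2 + (\<Theta> 0 $ 2)^2 - (\<Theta> 0 $ 3)^2
                                    + \<bar>\<Theta> t $ 1 * \<Theta> t $ 3\<bar>^2)) ` {0..})
        \<and> (SUP t\<in>{0..}. \<bar>\<Theta> t $ 1\<bar>)
            \<le> sqrt (SUP t\<in>{0..}. max 1 ((\<Theta> 0 $ 1)^2 + (\<Theta> 0 $ 2)^2 - (\<Theta> 0 $ 3)^2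
                                    + \<bar>\<Theta> t $ 1 * \<Theta> t $ 3\<bar>^2)))
     \<and> (\<forall>t\<ge>0. bdd_above ((\<lambda>x. \<bar>realiz (\<Theta> t) x\<bar>) ` {a..b})
          \<and> (SUP x\<in>{a..b}. \<bar>realiz (\<Theta> t) x\<bar>)
             \<le> 2 * (SUP x\<in>{a..b}. \<bar>f x\<bar>) + (b - a) * \<bar>\<Theta> t $ 1 * \<Theta> t $ 3\<bar>)
     \<and> (\<forall>\<alpha> \<beta>. (\<forall>x\<in>{a..b}. f x = \<alpha> * x + \<beta>) \<longrightarrow>
          bdd_below ((\<lambda>t. \<alpha> * \<Theta> t $ 1 * \<Theta> t $ 3) ` {0..})
          \<and> (INF t\<in>{0..}. \<alpha> * \<Theta> t $ 1 * \<Theta> t $ 3) > 0)"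
proof -
  interpret st: stat a b f using ab f_cont by unfold_locales
  have "flowloc a b \<rho> f R R' G \<Theta>"
    unfolding flowloc_def flowloc_axioms_def setting_def
    by (intro conjI ab rho f_cont R_deriv R'_cont R_lim R_bdd G_def G_locbdd Theta_cont Theta_flow)
  then interpret fl: flowloc a b \<rho> f R R' G \<Theta> .
  define L' where "L' = st.E (\<Theta> 0)"
  have lossE: "loss \<rho> a b f \<theta> = \<rho> * st.E \<theta>" for \<theta> by (simp add: loss_def st.E_def)
  have m0eq: "integral {a..b} (\<lambda>x. (f x - (1 / (b - a)) * integral {a..b} f)^2) = st.m0"
    by (simp add: st.m0_def st.mu_def)
  have L'lt: "L' < st.m0" using init rho unfolding lossE m0eq L'_def by simp
  have Et: "st.E (\<Theta> t) \<le> L'" if "t \<ge> 0" for t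
    using fl.loss_mono[OF that] rho unfolding lossE L'_def by simp
  have Elt: "st.E (\<Theta> t) < st.m0" if "t \<ge> 0" for t using Et[OF that] L'lt by linarith
  have s1: "(\<Theta> t $ 1 * \<Theta> t $ 3)^2 \<le> st.Sb L'" if "t \<ge> 0" for t
    by (rule st.slope_bound[OF Et[OF that] L'lt])
  have s1': "\<bar>\<Theta> t $ 1 * \<Theta> t $ 3\<bar> \<le> sqrt (st.Sb L')" if "t \<ge> 0" for t
    using s1[OF that] by (intro real_le_rsqrt) simp
  have i: "bdd_above ((\<lambda>t. \<bar>\<Theta> t $ 1 * \<Theta> t $ 3\<bar>) ` {0..})"
    using s1' by (intro bdd_aboveI2[of _ _ "sqrt (st.Sb L')"]) auto
  define K0 where "K0 = (\<Theta> 0 $ 1)^2 + (\<Theta> 0 $ 2)^2 - (\<Theta> 0 $ 3)^2"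
  define mx where "mx t = max 1 ((\<Theta> 0 $ 1)^2 + (\<Theta> 0 $ 2)^2 - (\<Theta> 0 $ 3)^2 + \<bar>\<Theta> t $ 1 * \<Theta> t $ 3\<bar>^2)" for t
  have wt: "(\<Theta> t $ 1)^2 \<le> mx t" if t: "t \<ge> 0" for t
  proof (cases "\<bar>\<Theta> t $ 1\<bar> \<le> 1")
    case True
    then have "(\<Theta> t $ 1)^2 \<le> 1" by (simp add: abs_square_le_1)
    then show ?thesis unfolding mx_def by simp
  next
    case False
    have cons: "(\<Theta> t $ 1)^2 + (\<Theta> t $ 2)^2 - (\<Theta> t $ 3)^2 = K0"
      using fl.conservation[OF t] unfolding fl.phi_def K0_def .
    have w0: "1 \<le> \<bar>\<Theta> t $ 1\<bar>" using False by simp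
    have "1 * 1 \<le> \<bar>\<Theta> t $ 1\<bar> * \<bar>\<Theta> t $ 1\<bar>" by (rule mult_mono[OF w0 w0]) auto
    then have w1: "(\<Theta> t $ 1)^2 \<ge> 1" by (simp add: power2_eq_square)
    have "(\<Theta> t $ 3)^2 = 1 * (\<Theta> t $ 3)^2" by simp
    also have "\<dots> \<le> (\<Theta> t $ 1)^2 * (\<Theta> t $ 3)^2" using w1 by (intro mult_right_mono) auto
    also have "\<dots> = \<bar>\<Theta> t $ 1 * \<Theta> t $ 3\<bar>^2" by (simp add: power_mult_distrib)
    finally have "(\<Theta> t $ 3)^2 \<le> \<bar>\<Theta> t $ 1 * \<Theta> t $ 3\<bar>^2" .
    moreover have "(\<Theta> t $ 2)^2 \<ge> 0" by simp
    ultimately have "(\<Theta> t $ 1)^2 \<le> K0 + \<bar>\<Theta> t $ 1 * \<Theta> t $ 3\<bar>^2" using cons by linarith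
    then show ?thesis unfolding mx_def K0_def by simp
  qed
  have wt': "\<bar>\<Theta> t $ 1\<bar> \<le> sqrt (mx t)" if "t \<ge> 0" for t
    using wt[OF that] by (intro real_le_rsqrt) simp
  have mxb: "mx t \<le> max 1 (K0 + st.Sb L')" if "t \<ge> 0" for t
    using s1[OF that] unfolding mx_def K0_def by (simp add: power2_abs)
  have ii2: "bdd_above (mx ` {0..})"
    using mxb by (intro bdd_aboveI2[of _ _ "max 1 (K0 + st.Sb L')"]) auto
  have ii1: "bdd_above ((\<lambda>t. \<bar>\<Theta> t $ 1\<bar>) ` {0..})"
  proof (intro bdd_aboveI2[of _ _ "sqrt (max 1 (K0 + st.Sb L'))"])
    fix t :: real assume "t \<in> {0..}"
    then have "t \<ge> 0" by simp
    then show "\<bar>\<Theta> t $ 1\<bar> \<le> sqrt (max 1 (K0 + st.Sb L'))"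
      using order_trans[OF wt' real_sqrt_le_mono[OF mxb]] by blast
  qed
  have ii3: "(SUP t\<in>{0..}. \<bar>\<Theta> t $ 1\<bar>) \<le> sqrt (SUP t\<in>{0..}. mx t)"
  proof (rule cSUP_least)
    show "{0::real..} \<noteq> {}" by auto
    fix t :: real assume t: "t \<in> {0..}"
    have s0: "mx t \<le> (SUP t\<in>{0..}. mx t)" by (rule cSUP_upper[OF t ii2])
    have s2: "sqrt (mx t) \<le> sqrt (SUP t\<in>{0..}. mx t)" by (rule real_sqrt_le_mono[OF s0])
    have t0: "t \<ge> 0" using t by simp
    show "\<bar>\<Theta> t $ 1\<bar> \<le> sqrt (SUP t\<in>{0..}. mx t)" by (rule order_trans[OF wt'[OF t0] s2])
  qed
  have iii: "\<forall>t\<ge>0. bdd_above ((\<lambda>x. \<bar>realiz (\<Theta> t) x\<bar>) ` {a..b})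
          \<and> (SUP x\<in>{a..b}. \<bar>realiz (\<Theta> t) x\<bar>)
             \<le> 2 * (SUP x\<in>{a..b}. \<bar>f x\<bar>) + (b - a) * \<bar>\<Theta> t $ 1 * \<Theta> t $ 3\<bar>"
  proof (intro allI impI conjI)
    fix t :: real assume t: "t \<ge> 0"
    show "bdd_above ((\<lambda>x. \<bar>realiz (\<Theta> t) x\<bar>) ` {a..b})" by (rule st.sup_bound(1)[OF Elt[OF t]])
    show "(SUP x\<in>{a..b}. \<bar>realiz (\<Theta> t) x\<bar>) \<le> 2 * (SUP x\<in>{a..b}. \<bar>f x\<bar>) + (b - a) * \<bar>\<Theta> t $ 1 * \<Theta> t $ 3\<bar>"
      by (rule st.sup_bound(2)[OF Elt[OF t]])
  qed
  have iv: "\<forall>\<alpha> \<beta>. (\<forall>x\<in>{a..b}. f x = \<alpha> * x + \<beta>) \<longrightarrow>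
          bdd_below ((\<lambda>t. \<alpha> * \<Theta> t $ 1 * \<Theta> t $ 3) ` {0..})
          \<and> (INF t\<in>{0..}. \<alpha> * \<Theta> t $ 1 * \<Theta> t $ 3) > 0"
  proof (intro allI impI)
    fix \<alpha> \<beta> assume aff: "\<forall>x\<in>{a..b}. f x = \<alpha> * x + \<beta>"
    define \<delta> where "\<delta> = 6 * (st.m0 - L') / (b - a)^3"
    have d0: "\<delta> > 0" unfolding \<delta>_def using L'lt ab by simp
    have lb: "\<alpha> * \<Theta> t $ 1 * \<Theta> t $ 3 \<ge> \<delta>" if "t \<ge> 0" for t
      unfolding \<delta>_def by (rule st.affine_pos[OF aff Et[OF that] L'lt])
    have "bdd_below ((\<lambda>t. \<alpha> * \<Theta> t $ 1 * \<Theta> t $ 3) ` {0..})"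
      using lb by (intro bdd_belowI2[of _ \<delta>]) auto
    moreover have "(INF t\<in>{0..}. \<alpha> * \<Theta> t $ 1 * \<Theta> t $ 3) \<ge> \<delta>"
      using lb by (intro cINF_greatest) auto
    ultimately show "bdd_below ((\<lambda>t. \<alpha> * \<Theta> t $ 1 * \<Theta> t $ 3) ` {0..})
          \<and> (INF t\<in>{0..}. \<alpha> * \<Theta> t $ 1 * \<Theta> t $ 3) > 0" using d0 by linarith
  qed
  have mxe: "(\<lambda>t. max 1 ((\<Theta> 0 $ 1)^2 + (\<Theta> 0 $ 2)^2 - (\<Theta> 0 $ 3)^2 + \<bar>\<Theta> t $ 1 * \<Theta> t $ 3\<bar>^2)) = mx"
    by (simp add: mx_def fun_eq_iff)
  show ?thesis unfolding mxe by (intro conjI i ii1 ii2 ii3 iii iv)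
qed

end
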